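(* Let $\tilde Q=\|q_{ik}\|$ define a $\tilde Q$-expansion of $[0,1]$ with $\inf_{i,k}q_{ik}>0$, and let $\varPhi$ be the family of its cylinders. Let $F=F_\xi$ be the distribution function of a random variable $\xi$ with independent $\tilde Q$-digits. Assume that $$\lim_{n\to\infty}\frac{\ln\lambda(F(\varDelta_n(x)))}{\ln\lambda(\varDelta_n(x))}=1\quad\text{for all }x\in[0,1],$$ where $\varDelta_n(x)$ is the rank-$n$ cylinder containing $x$ and $\lambda$ is Lebesgue measure. Then the family $\varPhi'=F(\varPhi)=\{F(\varDelta):\varDelta\in\varPhi\}$ (taking interiors as the open intervals) is faithful for packing dimension calculation: $\dim_P(E,\varPhi')=\dim_{P(\mathit{unc})}(E)$ for every $E\subset[0,1]$.
   Context: $\tilde Q$-expansion: integers $N_k\ge2$, $q_{ik}>0$ ($k\in\mathbb N$, $i\in\{0,\dots,N_k-1\}$), $\sum_iq_{ik}=1$, $\prod_k\max_iq_{ik}=0$; with $\beta_{ik}=\sum_{l<i}q_{lk}$ each $x\in[0,1]$ is $x=\sum_k\beta_{a_kk}\prod_{j<k}q_{a_jj}$; the rank-$n$ cylinder $\{x:a_j(x)=c_j,j\le n\}$ is an interval of length $\prod_{j\le n}q_{c_jj}$. A random variable with independent $\tilde Q$-digits is $\xi=\sum_k\beta_{\xi_kk}\prod_{j<k}q_{\xi_jj}$ with independent digits $\xi_k$, $P(\xi_k=i)=p_{ik}$. In $\mathbb R$: an uncentered $\varepsilon$-packing of $E$ is a countable family of pairwise disjoint open intervals of length $\le\varepsilon$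 each meeting $E$; $\mathcal P^\alpha_{\varepsilon(\mathit{unc})}(E)=\sup\sum|E_i|^\alpha$, $\mathcal P^\alpha_{0(\mathit{unc})}=\lim_{\varepsilon\to0}$, $\mathcal P^\alpha_{(\mathit{unc})}(E)=\inf\{\sum_j\mathcal P^\alpha_{0(\mathit{unc})}(E_j):E\subset\bigcup E_j\}$, $\dim_{P(\mathit{unc})}(E)=\inf\{\alpha:\mathcal P^\alpha_{(\mathit{unc})}(E)=0\}$; $\dim_P(E,\varPhi')$ is the same using only packings by intervals from $\varPhi'$. *)

theory Defs
  imports "HOL-Probability.Probability"
begin

text \<open>Digit positions k are indexed from 0 (the paper indexes them from 1).
  The matrix entry q_{ik} is written q i k.\<close>

definition Qexp :: "(nat \<Rightarrow> nat) \<Rightarrow> (nat \<Rightarrow> nat \<Rightarrow> real) \<Rightarrow> bool" where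
  "Qexp N q \<longleftrightarrow> (\<forall>k. N k \<ge> 2) \<and> (\<forall>k i. i < N k \<longrightarrow> q i k > 0)
     \<and> (\<forall>k. (\<Sum>i<N k. q i k) = 1)
     \<and> (\<lambda>n. \<Prod>k<n. Max ((\<lambda>i. q i k) ` {..<N k})) \<longlonglongrightarrow> 0"

definition Qbeta :: "(nat \<Rightarrow> nat \<Rightarrow> real) \<Rightarrow> nat \<Rightarrow> nat \<Rightarrow> real" where
  "Qbeta q i k = (\<Sum>l<i. q l k)"

definition digit_seq :: "(nat \<Rightarrow> nat) \<Rightarrow> (nat \<Rightarrow> nat) \<Rightarrow> bool" where
  "digit_seq N c \<longleftrightarrow> (\<forall>j. c j < N j)"

definition cyl_left :: "(nat \<Rightarrow> nat \<Rightarrow> real) \<Rightarrow> (nat \<Rightarrow> nat) \<Rightarrow> nat \<Rightarrow> real" where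
  "cyl_left q c n = (\<Sum>k<n. Qbeta q (c k) k * (\<Prod>j<k. q (c j) j))"

definition cyl_len :: "(nat \<Rightarrow> nat \<Rightarrow> real) \<Rightarrow> (nat \<Rightarrow> nat) \<Rightarrow> nat \<Rightarrow> real" where
  "cyl_len q c n = (\<Prod>j<n. q (c j) j)"

definition cylinder :: "(nat \<Rightarrow> nat \<Rightarrow> real) \<Rightarrow> nat \<Rightarrow> (nat \<Rightarrow> nat) \<Rightarrow> real set" where
  "cylinder q n c = {cyl_left q c n .. cyl_left q c n + cyl_len q c n}"

definition Qxi :: "(nat \<Rightarrow> nat \<Rightarrow> real) \<Rightarrow> (nat \<Rightarrow> 'a \<Rightarrow> nat) \<Rightarrow> 'a \<Rightarrow> real" where
  "Qxi q d \<omega> = (\<Sum>k. Qbeta q (d k \<omega>) k * (\<Prod>j<k. q (d j \<omega>) j))"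

definition distF :: "'a measure \<Rightarrow> (nat \<Rightarrow> nat \<Rightarrow> real) \<Rightarrow> (nat \<Rightarrow> 'a \<Rightarrow> nat) \<Rightarrow> real \<Rightarrow> real" where
  "distF M q d x = measure M {\<omega> \<in> space M. Qxi q d \<omega> < x}"

text \<open>Packings: a countable set of pairs (a,b), a < b, standing for pairwise disjoint open
  intervals (a,b) of length at most eps, each meeting E, each admissible.\<close>
definition is_packing :: "(real \<times> real \<Rightarrow> bool) \<Rightarrow> real \<Rightarrow> real set \<Rightarrow> (real \<times> real) set \<Rightarrow> bool" where
  "is_packing adm \<epsilon> E P \<longleftrightarrow> countable P
     \<and> (\<forall>I\<in>P. adm I \<and> fst I < snd I \<and> snd I - fst I \<le> \<epsilon> \<and> {fst I<..<snd I} \<inter> E \<noteq> {})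
     \<and> (\<forall>I\<in>P. \<forall>J\<in>P. I \<noteq> J \<longrightarrow> {fst I<..<snd I} \<inter> {fst J<..<snd J} = {})"

definition pack_pre :: "(real \<times> real \<Rightarrow> bool) \<Rightarrow> real \<Rightarrow> real \<Rightarrow> real set \<Rightarrow> ennreal" where
  "pack_pre adm \<alpha> \<epsilon> E =
     (SUP P \<in> {P. is_packing adm \<epsilon> E P}. (\<Sum>\<^sub>\<infinity> I\<in>P. ennreal ((snd I - fst I) powr \<alpha>)))"

definition pack0 :: "(real \<times> real \<Rightarrow> bool) \<Rightarrow> real \<Rightarrow> real set \<Rightarrow> ennreal" where
  "pack0 adm \<alpha> E = (INF \<epsilon> \<in> {0<..}. pack_pre adm \<alpha> \<epsilon> E)"

definition pack_measure :: "(real \<times> real \<Rightarrow> bool) \<Rightarrow> real \<Rightarrow> real set \<Rightarrow> ennreal" where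
  "pack_measure adm \<alpha> E =
     (INF A \<in> {A :: nat \<Rightarrow> real set. E \<subseteq> (\<Union>j. A j)}. (\<Sum>j. pack0 adm \<alpha> (A j)))"

definition pack_dim :: "(real \<times> real \<Rightarrow> bool) \<Rightarrow> real set \<Rightarrow> real" where
  "pack_dim adm E = Inf {\<alpha>. \<alpha> \<ge> 0 \<and> pack_measure adm \<alpha> E = 0}"

text \<open>Uncentered packings: all open intervals are admissible.\<close>
definition unc_adm :: "real \<times> real \<Rightarrow> bool" where
  "unc_adm I = True"

definition Fcyl_adm :: "(nat \<Rightarrow> nat) \<Rightarrow> (nat \<Rightarrow> nat \<Rightarrow> real) \<Rightarrow> (real \<Rightarrow> real) \<Rightarrow> real \<times> real \<Rightarrow> bool" where
  "Fcyl_adm N q F I \<longleftrightarrow> (\<exists>n c. digit_seq N c \<and>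
      I = (F (cyl_left q c n), F (cyl_left q c n + cyl_len q c n)))"

end

theory Submission
  imports Defs
begin


definition Nc :: "real set \<Rightarrow> real \<Rightarrow> nat" where
  "Nc S r = card ((\<lambda>y. \<lfloor>y / r\<rfloor>) ` S)"

lemma Nc_finite:
  assumes "S \<subseteq> {0..1}" "0 < r"
  shows "finite ((\<lambda>y. \<lfloor>y / r\<rfloor>) ` S)"
proof -
  have "(\<lambda>y. \<lfloor>y / r\<rfloor>) ` S \<subseteq> {0..\<lfloor>1/r\<rfloor>}"
  proof
    fix k assume "k \<in> (\<lambda>y. \<lfloor>y / r\<rfloor>) ` S"
    then obtain y where y: "y \<in> S" "k = \<lfloor>y/r\<rfloor>" by auto
    with assms have "0 \<le> y" "y \<le> 1" by auto
    then have "0 \<le> y / r" "y / r \<le> 1 / r" using assms(2) by (auto simp: divide_right_mono)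
    then show "k \<in> {0..\<lfloor>1/r\<rfloor>}" using y by (auto intro: floor_mono)
  qed
  then show ?thesis by (rule finite_subset) simp
qed

lemma packing_disj:
  assumes "is_packing adm \<epsilon> E P" "I \<in> P" "J \<in> P" "I \<noteq> J"
  shows "snd I \<le> fst J \<or> snd J \<le> fst I"
proof (rule ccontr)
  assume "\<not> ?thesis"
  hence h: "fst J < snd I" "fst I < snd J" by auto
  have "fst I < snd I" "fst J < snd J" using assms unfolding is_packing_def by auto
  define z where "z = (max (fst I) (fst J) + min (snd I) (snd J)) / 2"
  have "z \<in> {fst I<..<snd I} \<inter> {fst J<..<snd J}" using h \<open>fst I < snd I\<close> \<open>fst J < snd J\<close>
    unfolding z_def by (auto simp: max_def min_def)
  then show False using assms unfolding is_packing_def by blast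
qed

lemma packing_meets:
  assumes "is_packing adm \<epsilon> E P" "I \<in> P"
  shows "\<exists>y\<in>E. fst I < y \<and> y < snd I"
proof -
  have "{fst I<..<snd I} \<inter> E \<noteq> {}" using assms unfolding is_packing_def by blast
  then show ?thesis by auto
qed

lemma half_pow_tendsto:
  fixes w :: real assumes w: "0 < w" shows "\<exists>k. ((1::real)/2)^(Suc k) < w"
proof -
  have "\<exists>n. ((1::real)/2)^n < w" using real_arch_pow_inv[of w "1/2"] w by simp
  then obtain n where "((1::real)/2)^n < w" by blast
  moreover have "((1::real)/2)^(Suc n) \<le> (1/2)^n" by (simp add: power_decreasing)
  ultimately show ?thesis by (intro exI[of _ n]) linarith
qed

definition kk :: "real \<Rightarrow> nat" where
  "kk w = (LEAST k. ((1::real)/2)^(Suc k) < w)"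

lemma kk_props:
  assumes "0 < w" "w \<le> 1"
  shows "((1::real)/2)^(Suc (kk w)) < w" "w \<le> (1/2)^(kk w)"
proof -
  show "((1::real)/2)^(Suc (kk w)) < w" unfolding kk_def
    using half_pow_tendsto[OF assms(1)] by (rule LeastI_ex)
  show "w \<le> (1/2)^(kk w)"
  proof (cases "kk w")
    case 0 then show ?thesis using assms by simp
  next
    case (Suc j)
    have "\<not> ((1::real)/2)^(Suc j) < w"
    proof
      assume "((1::real)/2)^(Suc j) < w"
      then have "kk w \<le> j" unfolding kk_def by (rule Least_le)
      with Suc show False by simp
    qed
    then show ?thesis using Suc by simp
  qed
qed

lemma floor_close:
  fixes a b :: real assumes "\<bar>a - b\<bar> < 1"
  shows "\<lfloor>a\<rfloor> = \<lfloor>b\<rfloor> - 1 \<or> \<lfloor>a\<rfloor> = \<lfloor>b\<rfloor> \<or> \<lfloor>a\<rfloor> = \<lfloor>b\<rfloor> + 1"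
proof -
  have "\<lfloor>a\<rfloor> < \<lfloor>b\<rfloor> + 2" using assms by linarith
  moreover have "\<lfloor>b\<rfloor> < \<lfloor>a\<rfloor> + 2" using assms by linarith
  ultimately show ?thesis by linarith
qed

lemma class_card:
  assumes P: "is_packing adm \<epsilon> S P" and S: "S \<subseteq> {0..1}" and eps: "\<epsilon> \<le> 1"
    and P': "P' \<subseteq> P"
  shows "card {I\<in>P'. kk (snd I - fst I) = k} \<le> 3 * Nc S ((1/2)^(Suc k))"
proof -
  define s :: real where "s = (1/2)^(Suc k)"
  have s0: "0 < s" unfolding s_def by simp
  define FS where "FS = (\<lambda>y. \<lfloor>y / s\<rfloor>) ` S"
  have finFS: "finite FS" unfolding FS_def using Nc_finite[OF S s0] .
  define G where "G = (\<lambda>i. i - 1) ` FS \<union> FS \<union> (\<lambda>i. i + 1) ` FS"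
  have finG: "finite G" unfolding G_def using finFS by simp
  have cardG: "card G \<le> 3 * card FS"
  proof -
    have "card G \<le> card ((\<lambda>i. i - 1) ` FS \<union> FS) + card ((\<lambda>i. i + 1) ` FS)"
      unfolding G_def by (rule card_Un_le)
    also have "\<dots> \<le> card ((\<lambda>i. i - 1) ` FS) + card FS + card ((\<lambda>i. i + 1) ` FS)"
      using card_Un_le[of "(\<lambda>i. i - 1) ` FS" FS] by simp
    also have "\<dots> \<le> 3 * card FS" using card_image_le[OF finFS, of "\<lambda>i. i - 1"]
      card_image_le[OF finFS, of "\<lambda>i. i + 1"] by simp
    finally show ?thesis .
  qed
  define h where "h I = \<lfloor>((fst I + snd I) / 2) / s\<rfloor>" for I :: "real \<times> real"
  let ?C = "{I\<in>P'. kk (snd I - fst I) = k}"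
  have wid: "s < snd I - fst I \<and> snd I - fst I \<le> 2 * s" if "I \<in> ?C" for I
  proof -
    have "I \<in> P" using that P' by auto
    then have "0 < snd I - fst I" "snd I - fst I \<le> 1" using P eps unfolding is_packing_def by auto
    from kk_props[OF this] that show ?thesis unfolding s_def by auto
  qed
  have "inj_on h ?C"
  proof (rule inj_onI, rule ccontr)
    fix I J assume I: "I \<in> ?C" and J: "J \<in> ?C" and hh: "h I = h J" and ne: "I \<noteq> J"
    have IP: "I \<in> P" "J \<in> P" using I J P' by auto
    have wI: "s < snd I - fst I" and wJ: "s < snd J - fst J" using wid I J by auto
    have "1 < \<bar>((fst I + snd I) / 2) / s - ((fst J + snd J) / 2) / s\<bar>"
    proof -
      have "snd I \<le> fst J \<or> snd J \<le> fst I" using packing_disj[OF P IP ne] .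
      moreover have "\<And>a b c d::real. s < b - a \<Longrightarrow> s < d - c \<Longrightarrow> b \<le> c \<or> d \<le> a \<Longrightarrow> s < \<bar>(a + b) / 2 - (c + d) / 2\<bar>"
        by (auto simp: abs_real_def field_simps)
      ultimately have "s < \<bar>(fst I + snd I) / 2 - (fst J + snd J) / 2\<bar>" using wI wJ by blast
      then have "s < \<bar>((fst I + snd I) / 2 - (fst J + snd J) / 2)\<bar>" by simp
      then have "1 < \<bar>((fst I + snd I) / 2 - (fst J + snd J) / 2)\<bar> / s" using s0 by simp
      also have "\<dots> = \<bar>((fst I + snd I) / 2 - (fst J + snd J) / 2) / s\<bar>"
        using s0 by (simp add: abs_divide)
      also have "\<dots> = \<bar>((fst I + snd I) / 2) / s - ((fst J + snd J) / 2) / s\<bar>"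
        by (simp only: diff_divide_distrib)
      finally show ?thesis .
    qed
    then show False using hh unfolding h_def by linarith
  qed
  moreover have "h ` ?C \<subseteq> G"
  proof
    fix j assume "j \<in> h ` ?C"
    then obtain I where I: "I \<in> ?C" "j = h I" by auto
    have IP: "I \<in> P" using I P' by auto
    obtain y where y: "y \<in> S" "fst I < y" "y < snd I" using packing_meets[OF P IP] by auto
    have w: "snd I - fst I \<le> 2 * s" using wid I(1) by auto
    have "\<bar>(fst I + snd I) / 2 - y\<bar> < s" using y w by (auto simp: abs_real_def field_simps)
    then have "\<bar>((fst I + snd I) / 2 - y) / s\<bar> < 1" using s0
      by (simp add: abs_divide divide_less_eq)
    then have "\<bar>((fst I + snd I) / 2) / s - y / s\<bar> < 1"
      by (simp only: diff_divide_distrib)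
    from floor_close[OF this] have "j \<in> {\<lfloor>y/s\<rfloor> - 1, \<lfloor>y/s\<rfloor>, \<lfloor>y/s\<rfloor> + 1}"
      unfolding I(2) h_def by auto
    moreover have "\<lfloor>y/s\<rfloor> \<in> FS" unfolding FS_def using y by auto
    ultimately show "j \<in> G" unfolding G_def by auto
  qed
  ultimately have "card ?C \<le> card G" using finG by (intro card_inj_on_le) auto
  also have "\<dots> \<le> 3 * Nc S s" using cardG unfolding Nc_def FS_def .
  finally show ?thesis unfolding s_def .
qed


lemma geo_tail:
  fixes \<rho> :: real
  assumes "0 \<le> \<rho>" "\<rho> < 1" "finite K" "K \<subseteq> {m..}"
  shows "(\<Sum>k\<in>K. \<rho>^k) \<le> \<rho>^m / (1 - \<rho>)"
proof -
  have inj: "inj_on (\<lambda>k. k - m) K"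
  proof (rule inj_onI)
    fix x y assume "x \<in> K" "y \<in> K" "x - m = y - m"
    moreover have "m \<le> x" "m \<le> y" using assms(4) \<open>x \<in> K\<close> \<open>y \<in> K\<close> by auto
    ultimately show "x = y" by linarith
  qed
  have e1: "\<rho>^k = \<rho>^m * \<rho>^(k - m)" if "k \<in> K" for k
  proof -
    have "m \<le> k" using that assms(4) by auto
    then have "k = m + (k - m)" by simp
    then show ?thesis by (metis power_add)
  qed
  have "(\<Sum>k\<in>K. \<rho>^k) = (\<Sum>k\<in>K. \<rho>^m * \<rho>^(k - m))"
    using e1 by (rule sum.cong[OF refl])
  also have "\<dots> = \<rho>^m * (\<Sum>i\<in>(\<lambda>k. k - m) ` K. \<rho>^i)"
    by (simp add: sum_distrib_left sum.reindex[OF inj])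
  finally have eq: "(\<Sum>k\<in>K. \<rho>^k) = \<rho>^m * (\<Sum>i\<in>(\<lambda>k. k - m) ` K. \<rho>^i)" .
  have le: "(\<Sum>i\<in>(\<lambda>k. k - m) ` K. \<rho>^i) \<le> (\<Sum>i. \<rho>^i)"
    by (rule sum_le_suminf) (use assms in \<open>auto intro: summable_geometric\<close>)
  have "(\<Sum>i. \<rho>^i) = 1 / (1 - \<rho>)" using assms by (intro suminf_geometric) auto
  with le have "\<rho>^m * (\<Sum>i\<in>(\<lambda>k. k - m) ` K. \<rho>^i) \<le> \<rho>^m * (1 / (1 - \<rho>))"
    using assms(1) by (intro mult_left_mono) auto
  with eq show ?thesis by simp
qed

lemma half_pow_powr: "(((1::real)/2)^n) powr a = 2 powr (- (real n * a))"
proof -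
  have "((1::real)/2)^n = inverse (2 ^ n)" by (simp add: power_one_over inverse_eq_divide)
  also have "\<dots> = inverse (2 powr (real n))" by (simp add: powr_realpow)
  also have "\<dots> = 2 powr (- real n)" by (rule powr_minus[symmetric])
  finally have "((1::real)/2)^n = 2 powr (- real n)" .
  then show ?thesis by (simp only: powr_powr) simp
qed
lemma packing_finite_bound:
  assumes P: "is_packing adm ((1/2)^(Suc J)) S P" and S: "S \<subseteq> {0..1}"
    and s: "0 \<le> s" "s < \<beta>" and C: "0 \<le> C" and r1: "(1/2)^(Suc J) \<le> r1"
    and bound: "\<And>r. 0 < r \<Longrightarrow> r \<le> r1 \<Longrightarrow> real (Nc S r) \<le> C * r powr (-s)"
    and P': "finite P'" "P' \<subseteq> P"
  shows "(\<Sum>I\<in>P'. (snd I - fst I) powr \<beta>)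
     \<le> 3 * C * 2 powr s * (2 powr (s - \<beta>))^(Suc J) / (1 - 2 powr (s - \<beta>))"
proof -
  define \<rho> :: real where "\<rho> = 2 powr (s - \<beta>)"
  have \<rho>0: "0 \<le> \<rho>" and \<rho>1: "\<rho> < 1" unfolding \<rho>_def using s powr_less_one[of 2 "s - \<beta>"] by auto
  define w where "w I = snd I - fst I" for I :: "real \<times> real"
  define g where "g I = kk (w I)" for I
  have eps1: "((1::real)/2)^(Suc J) \<le> 1" by (rule power_le_one) auto
  have wI: "0 < w I \<and> w I \<le> (1/2)^(Suc J)" if "I \<in> P" for I
    using P that unfolding is_packing_def w_def by auto
  have "(\<Sum>I\<in>P'. w I powr \<beta>) = (\<Sum>k\<in>g ` P'. \<Sum>I\<in>{I. I \<in> P' \<and> g I = k}. w I powr \<beta>)"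
    using P'(1) by (rule sum.image_gen)
  also have "\<dots> \<le> (\<Sum>k\<in>g ` P'. 3 * C * 2 powr s * \<rho>^k)"
  proof (rule sum_mono)
    fix k assume "k \<in> g ` P'"
    then obtain I0 where I0: "I0 \<in> P'" "k = g I0" by auto
    have I0P: "I0 \<in> P" using I0 P' by auto
    have w0: "0 < w I0" "w I0 \<le> 1" using wI[OF I0P] eps1 by auto
    have "((1::real)/2)^(Suc k) < w I0"
      using kk_props(1)[OF w0] I0(2) unfolding g_def by simp
    then have "((1::real)/2)^(Suc k) < (1/2)^(Suc J)"
      using wI[OF I0P] by linarith
    then have rle: "((1::real)/2)^(Suc k) \<le> r1" using r1 by linarith
    have "(\<Sum>I\<in>{I. I \<in> P' \<and> g I = k}. w I powr \<beta>) \<le> of_nat (card {I. I \<in> P' \<and> g I = k}) * ((1/2)^k) powr \<beta>"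
    proof (rule sum_bounded_above)
      fix I assume "I \<in> {I. I \<in> P' \<and> g I = k}"
      then have IP: "I \<in> P" and gk: "kk (w I) = k" using P' unfolding g_def by auto
      have w1: "0 < w I" "w I \<le> 1" using wI[OF IP] eps1 by auto
      have "w I \<le> (1/2)^k" using kk_props(2)[OF w1] gk by simp
      with w1 show "w I powr \<beta> \<le> ((1/2)^k) powr \<beta>" using s by (intro powr_mono2) auto
    qed
    also have "\<dots> \<le> (3 * C * ((1/2)^(Suc k)) powr (-s)) * ((1/2)^k) powr \<beta>"
    proof (rule mult_right_mono)
      have "card {I. I \<in> P' \<and> g I = k} \<le> 3 * Nc S ((1/2)^(Suc k))"
        using class_card[OF P S eps1 P'(2), of k] unfolding g_def w_def by simp
      then have "real (card {I. I \<in> P' \<and> g I = k}) \<le> 3 * real (Nc S ((1/2)^(Suc k)))" by linarith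
      also have "\<dots> \<le> 3 * (C * ((1/2)^(Suc k)) powr (-s))" using bound[OF _ rle] by simp
      finally show "of_nat (card {I. I \<in> P' \<and> g I = k}) \<le> 3 * C * ((1/2)^(Suc k)) powr (-s)" by simp
    qed simp
    also have "\<dots> = 3 * C * 2 powr s * \<rho>^k"
    proof -
      have "(((1::real)/2)^(Suc k)) powr (-s) * ((1/2)^k) powr \<beta> = 2 powr (real (Suc k) * s - real k * \<beta>)"
        unfolding half_pow_powr by (simp add: powr_add[symmetric])
      also have "\<dots> = 2 powr s * (2 powr (real k * (s - \<beta>)))"
        by (simp add: powr_add[symmetric] algebra_simps)
      also have "2 powr (real k * (s - \<beta>)) = \<rho>^k"
        proof -
        have "(2 powr (s - \<beta>))^k = (2 powr (s - \<beta>)) powr (real k)" by (simp add: powr_realpow)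
        also have "\<dots> = 2 powr (real k * (s - \<beta>))" by (simp only: powr_powr mult.commute)
        finally show ?thesis unfolding \<rho>_def by simp
      qed
      finally show ?thesis by simp
    qed
    finally show "(\<Sum>I\<in>{I. I \<in> P' \<and> g I = k}. w I powr \<beta>) \<le> 3 * C * 2 powr s * \<rho>^k" .
  qed
  also have "\<dots> = 3 * C * 2 powr s * (\<Sum>k\<in>g ` P'. \<rho>^k)" by (simp add: sum_distrib_left)
  also have "\<dots> \<le> 3 * C * 2 powr s * (\<rho>^(Suc J) / (1 - \<rho>))"
  proof (rule mult_left_mono)
    have "g ` P' \<subseteq> {Suc J..}"
    proof
      fix k assume "k \<in> g ` P'"
      then obtain I0 where I0: "I0 \<in> P'" "k = g I0" by auto
      have I0P: "I0 \<in> P" using I0 P' by auto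
      have w0: "0 < w I0" "w I0 \<le> 1" using wI[OF I0P] eps1 by auto
      have "((1::real)/2)^(Suc k) < w I0"
        using kk_props(1)[OF w0] I0(2) unfolding g_def by simp
      then have "((1::real)/2)^(Suc k) < (1/2)^(Suc J)"
        using wI[OF I0P] by linarith
      then have "Suc J < Suc k" by (simp add: power_strict_decreasing_iff)
      then show "k \<in> {Suc J..}" by simp
    qed
    then show "(\<Sum>k\<in>g ` P'. \<rho>^k) \<le> \<rho>^(Suc J) / (1 - \<rho>)"
      using geo_tail[OF \<rho>0 \<rho>1 _ \<open>g ` P' \<subseteq> {Suc J..}\<close>] P'(1) by blast
  qed (use C in simp)
  finally show ?thesis unfolding \<rho>_def w_def by simp
qed


lemma packU:
  assumes S: "S \<subseteq> {0..1}" and s: "0 \<le> s" "s < \<beta>" and C: "0 \<le> C" and r1: "0 < r1"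
    and bound: "\<And>r. 0 < r \<Longrightarrow> r \<le> r1 \<Longrightarrow> real (Nc S r) \<le> C * r powr (-s)"
  shows "pack0 adm \<beta> S = 0"
proof -
  define \<rho> :: real where "\<rho> = 2 powr (s - \<beta>)"
  have \<rho>0: "0 \<le> \<rho>" and \<rho>1: "\<rho> < 1" unfolding \<rho>_def using s powr_less_one[of 2 "s - \<beta>"] by auto
  define B where "B J = 3 * C * 2 powr s * \<rho>^(Suc J) / (1 - \<rho>)" for J
  have pre: "pack_pre adm \<beta> ((1/2)^(Suc J)) S \<le> ennreal (B J)" if J: "(1/2)^(Suc J) \<le> r1" for J
    unfolding pack_pre_def
  proof (rule SUP_least)
    fix P assume "P \<in> {P. is_packing adm ((1/2)^(Suc J)) S P}"
    then have P: "is_packing adm ((1/2)^(Suc J)) S P" by simp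
    show "(\<Sum>\<^sub>\<infinity>I\<in>P. ennreal ((snd I - fst I) powr \<beta>)) \<le> ennreal (B J)"
    proof (rule infsum_le_finite_sums)
      show "(\<lambda>I. ennreal ((snd I - fst I) powr \<beta>)) summable_on P"
        by (rule nonneg_summable_on_complete) simp
    next
      fix F assume F: "finite F" "F \<subseteq> P"
      have "(\<Sum>I\<in>F. ennreal ((snd I - fst I) powr \<beta>)) = ennreal (\<Sum>I\<in>F. (snd I - fst I) powr \<beta>)"
        by (rule sum_ennreal) simp
      also have "\<dots> \<le> ennreal (B J)"
        using packing_finite_bound[OF P S s C J bound F] unfolding B_def \<rho>_def
        by (intro ennreal_leI) simp
      finally show "(\<Sum>I\<in>F. ennreal ((snd I - fst I) powr \<beta>)) \<le> ennreal (B J)" .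
    qed
  qed
  have B0: "B \<longlonglongrightarrow> 0"
  proof -
    have "(\<lambda>J. \<rho>^(Suc J)) \<longlonglongrightarrow> 0"
      using LIMSEQ_power_zero[of \<rho>] \<rho>0 \<rho>1 by (intro LIMSEQ_Suc) simp
    then have "(\<lambda>J. (3 * C * 2 powr s) * \<rho>^(Suc J) / (1 - \<rho>)) \<longlonglongrightarrow> (3 * C * 2 powr s) * 0 / (1 - \<rho>)"
      using \<rho>1 by (intro tendsto_intros) auto
    then show ?thesis unfolding B_def by simp
  qed
  have half0: "(\<lambda>J. ((1::real)/2)^(Suc J)) \<longlonglongrightarrow> 0"
    using LIMSEQ_power_zero[of "(1::real)/2"] by (intro LIMSEQ_Suc) simp
  show ?thesis
  proof (rule antisym[OF ennreal_le_epsilon], simp_all)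
    fix e :: real assume e: "0 < e"
    have "eventually (\<lambda>J. B J < e) sequentially"
      using B0 e by (rule order_tendstoD)
    moreover have "eventually (\<lambda>J. ((1::real)/2)^(Suc J) < r1) sequentially"
      using half0 r1 by (rule order_tendstoD)
    ultimately obtain J where J: "B J < e" "((1::real)/2)^(Suc J) < r1"
      by (metis (mono_tags, lifting) eventually_conj_iff eventually_sequentially order.refl)
    have "pack0 adm \<beta> S \<le> pack_pre adm \<beta> ((1/2)^(Suc J)) S"
      unfolding pack0_def by (rule INF_lower) simp
    also have "\<dots> \<le> ennreal (B J)" using pre J(2) by simp
    also have "\<dots> \<le> ennreal e" using J(1) by (intro ennreal_leI) simp
    finally show "pack0 adm \<beta> S \<le> ennreal e" .
  qed
qed


lemma floor_bounds_mult:
  fixes y r :: real assumes "0 < r" "\<lfloor>y / r\<rfloor> = k"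
  shows "of_int k * r \<le> y" "y < (of_int k + 1) * r"
proof -
  have "of_int k \<le> y / r" "y / r < of_int k + 1" using assms(2) by linarith+
  then show "of_int k * r \<le> y" "y < (of_int k + 1) * r" using assms(1)
    by (simp_all add: pos_le_divide_eq pos_divide_less_eq)
qed

lemma mod3_sep:
  fixes k k' :: int assumes "k mod 3 = k' mod 3" "k < k'"
  shows "k + 3 \<le> k'"
proof -
  have "3 dvd (k - k')" using assms(1) by (simp add: mod_eq_dvd_iff)
  then obtain t where t: "k - k' = 3 * t" by (auto elim: dvdE)
  with assms(2) have "t < 0" by linarith
  with t show ?thesis by linarith
qed

lemma residue_bound:
  assumes S: "S \<subseteq> {0..1}" and \<alpha>: "0 \<le> \<alpha>" and \<kappa>: "0 < \<kappa>" and r: "0 < r" "r \<le> \<epsilon>"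
    and good: "\<And>y. y \<in> S \<Longrightarrow> \<exists>a b. adm (a,b) \<and> a < y \<and> y < b \<and> b - a \<le> r \<and> \<kappa> * r powr \<gamma> \<le> b - a"
    and K: "pack_pre adm \<alpha> \<epsilon> S = ennreal K" and K0: "0 \<le> K"
  shows "real (card {k \<in> (\<lambda>y. \<lfloor>y / r\<rfloor>) ` S. k mod 3 = \<rho>}) * (\<kappa> * r powr \<gamma>) powr \<alpha> \<le> K"
proof -
  define FS where "FS = (\<lambda>y. \<lfloor>y / r\<rfloor>) ` S"
  have finFS: "finite FS" unfolding FS_def using Nc_finite[OF S r(1)] .
  define Kr where "Kr = {k \<in> FS. k mod 3 = \<rho>}"
  have finKr: "finite Kr" unfolding Kr_def using finFS by simp
  define yk where "yk k = (SOME y. y \<in> S \<and> \<lfloor>y / r\<rfloor> = k)" for k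
  have yk: "yk k \<in> S \<and> \<lfloor>yk k / r\<rfloor> = k" if "k \<in> FS" for k
  proof -
    have "\<exists>y. y \<in> S \<and> \<lfloor>y / r\<rfloor> = k" using that unfolding FS_def by auto
    then show ?thesis unfolding yk_def by (rule someI_ex)
  qed
  define ab where "ab y = (SOME I. adm I \<and> fst I < y \<and> y < snd I \<and> snd I - fst I \<le> r \<and> \<kappa> * r powr \<gamma> \<le> snd I - fst I)" for y
  have ab: "adm (ab y) \<and> fst (ab y) < y \<and> y < snd (ab y) \<and> snd (ab y) - fst (ab y) \<le> r \<and> \<kappa> * r powr \<gamma> \<le> snd (ab y) - fst (ab y)"
    if yS: "y \<in> S" for y
  proof -
    obtain a b where "adm (a,b) \<and> a < y \<and> y < b \<and> b - a \<le> r \<and> \<kappa> * r powr \<gamma> \<le> b - a" using good[OF yS] by blast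
    then have "\<exists>I. adm I \<and> fst I < y \<and> y < snd I \<and> snd I - fst I \<le> r \<and> \<kappa> * r powr \<gamma> \<le> snd I - fst I"
      by (intro exI[of _ "(a,b)"]) simp
    then show ?thesis unfolding ab_def by (rule someI_ex)
  qed
  define J where "J k = ab (yk k)" for k
  have Jp: "adm (J k) \<and> fst (J k) < yk k \<and> yk k < snd (J k) \<and> snd (J k) - fst (J k) \<le> r
      \<and> \<kappa> * r powr \<gamma> \<le> snd (J k) - fst (J k) \<and> yk k \<in> S
      \<and> of_int k * r \<le> yk k \<and> yk k < (of_int k + 1) * r" if "k \<in> FS" for k
    using ab[of "yk k"] yk[OF that] floor_bounds_mult[OF r(1), of "yk k" k] unfolding J_def by auto
  have sep: "snd (J k) \<le> fst (J k')" if "k \<in> Kr" "k' \<in> Kr" "k < k'" for k k'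
  proof -
    have k3: "k + 3 \<le> k'" using mod3_sep[of k k'] that unfolding Kr_def by auto
    have kF: "k \<in> FS" "k' \<in> FS" using that unfolding Kr_def by auto
    have "snd (J k) < (of_int k + 2) * r"
      using Jp[OF kF(1)] by (simp add: algebra_simps)
    also have "\<dots> \<le> (of_int k' - 1) * r"
    proof -
      have "of_int k + 2 \<le> (of_int k' - 1 :: real)" using k3 by linarith
      then show ?thesis using r(1) by (intro mult_right_mono) auto
    qed
    also have "\<dots> \<le> fst (J k')"
      using Jp[OF kF(2)] by (simp add: algebra_simps)
    finally show ?thesis by simp
  qed
  have disj: "{fst (J k)<..<snd (J k)} \<inter> {fst (J k')<..<snd (J k')} = {}"
    if "k \<in> Kr" "k' \<in> Kr" "k \<noteq> k'" for k k'
  proof (cases "k < k'")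
    case True then show ?thesis using sep[OF that(1,2)] by auto
  next
    case False then have "k' < k" using that(3) by simp
    then show ?thesis using sep[OF that(2,1)] by auto
  qed
  have injJ: "inj_on J Kr"
  proof (rule inj_onI, rule ccontr)
    fix k k' assume kk: "k \<in> Kr" "k' \<in> Kr" "J k = J k'" "k \<noteq> k'"
    have "k \<in> FS" using kk unfolding Kr_def by auto
    then have "yk k \<in> {fst (J k)<..<snd (J k)}" using Jp by auto
    then show False using disj[OF kk(1,2,4)] kk(3) by auto
  qed
  have pack: "is_packing adm \<epsilon> S (J ` Kr)"
    unfolding is_packing_def
  proof (intro conjI ballI impI)
    show "countable (J ` Kr)" using finKr by (simp add: countable_finite)
  next
    fix I assume "I \<in> J ` Kr"
    then obtain k where k: "k \<in> Kr" "I = J k" by auto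
    then have kF: "k \<in> FS" unfolding Kr_def by auto
    show "adm I" using Jp[OF kF] k by auto
    show "fst I < snd I" using Jp[OF kF] k by auto
    show "snd I - fst I \<le> \<epsilon>" using Jp[OF kF] k r by auto
    show "{fst I<..<snd I} \<inter> S \<noteq> {}" using Jp[OF kF] k by auto
  next
    fix I I' assume "I \<in> J ` Kr" "I' \<in> J ` Kr" "I \<noteq> I'"
    then obtain k k' where "k \<in> Kr" "k' \<in> Kr" "I = J k" "I' = J k'" "k \<noteq> k'" by auto
    then show "{fst I<..<snd I} \<inter> {fst I'<..<snd I'} = {}" using disj by auto
  qed
  define cr where "cr = (\<kappa> * r powr \<gamma>) powr \<alpha>"
  have "0 \<le> cr" unfolding cr_def by simp
  then have "ennreal (real (card Kr) * cr) = (\<Sum>k\<in>Kr. ennreal cr)"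
    by (simp add: ennreal_mult ennreal_of_nat_eq_real_of_nat)
  also have "\<dots> \<le> (\<Sum>k\<in>Kr. ennreal ((snd (J k) - fst (J k)) powr \<alpha>))"
  proof (rule sum_mono)
    fix k assume "k \<in> Kr"
    then have kF: "k \<in> FS" unfolding Kr_def by auto
    have "0 \<le> \<kappa> * r powr \<gamma>" using \<kappa> by simp
    then show "ennreal cr \<le> ennreal ((snd (J k) - fst (J k)) powr \<alpha>)"
      unfolding cr_def using Jp[OF kF] \<alpha> by (intro ennreal_leI powr_mono2) auto
  qed
  also have "\<dots> = (\<Sum>I\<in>J ` Kr. ennreal ((snd I - fst I) powr \<alpha>))"
    by (simp add: sum.reindex[OF injJ])
  also have "\<dots> = (\<Sum>\<^sub>\<infinity>I\<in>J ` Kr. ennreal ((snd I - fst I) powr \<alpha>))"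
    using finKr by simp
  also have "\<dots> \<le> pack_pre adm \<alpha> \<epsilon> S"
    unfolding pack_pre_def using pack by (intro SUP_upper) simp
  also have "\<dots> = ennreal K" by (rule K)
  finally have "ennreal (real (card Kr) * cr) \<le> ennreal K" .
  then have "real (card Kr) * cr \<le> K" using K0 by (simp add: ennreal_le_iff)
  then show ?thesis unfolding Kr_def FS_def cr_def .
qed


lemma packB:
  assumes S: "S \<subseteq> {0..1}" and \<alpha>: "0 \<le> \<alpha>" and \<kappa>: "0 < \<kappa>" and r0: "0 < r0"
    and good: "\<And>y r. y \<in> S \<Longrightarrow> 0 < r \<Longrightarrow> r < r0 \<Longrightarrow>
       \<exists>a b. adm (a,b) \<and> a < y \<and> y < b \<and> b - a \<le> r \<and> \<kappa> * r powr \<gamma> \<le> b - a"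
    and fin: "pack0 adm \<alpha> S < \<top>"
  shows "\<exists>C r1. 0 \<le> C \<and> 0 < r1 \<and> (\<forall>r. 0 < r \<longrightarrow> r \<le> r1 \<longrightarrow> real (Nc S r) \<le> C * r powr (-(\<alpha>*\<gamma>)))"
proof -
  obtain \<epsilon> where \<epsilon>: "0 < \<epsilon>" "pack_pre adm \<alpha> \<epsilon> S < \<top>"
    using fin unfolding pack0_def by (auto simp: INF_less_iff)
  define K where "K = enn2real (pack_pre adm \<alpha> \<epsilon> S)"
  have K: "pack_pre adm \<alpha> \<epsilon> S = ennreal K" unfolding K_def using \<epsilon>(2) by (simp add: ennreal_enn2real)
  have K0: "0 \<le> K" unfolding K_def by simp
  define r1 where "r1 = min \<epsilon> (r0 / 2)"
  define C where "C = 3 * K / \<kappa> powr \<alpha>"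
  have r1: "0 < r1" unfolding r1_def using \<epsilon> r0 by simp
  have C: "0 \<le> C" unfolding C_def using K0 by simp
  have "\<forall>r. 0 < r \<longrightarrow> r \<le> r1 \<longrightarrow> real (Nc S r) \<le> C * r powr (-(\<alpha>*\<gamma>))"
  proof (intro allI impI)
    fix r :: real assume r: "0 < r" "r \<le> r1"
    have rle: "r \<le> \<epsilon>" "r < r0" using r r0 unfolding r1_def by auto
    have goodr: "\<exists>a b. adm (a,b) \<and> a < y \<and> y < b \<and> b - a \<le> r \<and> \<kappa> * r powr \<gamma> \<le> b - a" if "y \<in> S" for y
      using good[OF that r(1) rle(2)] .
    define FS where "FS = (\<lambda>y. \<lfloor>y / r\<rfloor>) ` S"
    define A where "A \<rho> = {k \<in> FS. k mod 3 = \<rho>}" for \<rho> :: int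
    define cr where "cr = (\<kappa> * r powr \<gamma>) powr \<alpha>"
    have cr0: "0 < cr" unfolding cr_def using \<kappa> r(1) by simp
    have bA: "real (card (A \<rho>)) * cr \<le> K" for \<rho>
      unfolding A_def FS_def cr_def using residue_bound[OF S \<alpha> \<kappa> r(1) rle(1) goodr K K0] by blast
    have finFS: "finite FS" unfolding FS_def using Nc_finite[OF S r(1)] .
    have "FS \<subseteq> A 0 \<union> A 1 \<union> A 2" unfolding A_def by auto
    then have "card FS \<le> card (A 0 \<union> A 1 \<union> A 2)"
      by (rule card_mono[rotated]) (simp add: A_def finFS)
    also have "\<dots> \<le> card (A 0) + card (A 1) + card (A 2)"
      by (meson add_le_mono card_Un_le dual_order.trans le_refl)
    finally have "real (card FS) \<le> real (card (A 0)) + real (card (A 1)) + real (card (A 2))" by linarith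
    then have "real (card FS) * cr \<le> (real (card (A 0)) + real (card (A 1)) + real (card (A 2))) * cr"
      using cr0 by (intro mult_right_mono) auto
    also have "\<dots> = real (card (A 0)) * cr + real (card (A 1)) * cr + real (card (A 2)) * cr"
      by (simp only: distrib_right)
    also have "\<dots> \<le> 3 * K" using bA[of 0] bA[of 1] bA[of 2] by linarith
    finally have "real (card FS) \<le> 3 * K / cr" using cr0 by (simp add: pos_le_divide_eq)
    also have "3 * K / cr = C * r powr (-(\<alpha>*\<gamma>))"
    proof -
      have "cr = \<kappa> powr \<alpha> * r powr (\<gamma> * \<alpha>)" unfolding cr_def using \<kappa> r
        by (simp add: powr_mult powr_powr)
      moreover have "r powr (-(\<alpha>*\<gamma>)) = 1 / r powr (\<gamma> * \<alpha>)"
        by (simp add: powr_minus inverse_eq_divide mult.commute)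
      ultimately show ?thesis unfolding C_def by simp
    qed
    finally show "real (Nc S r) \<le> C * r powr (-(\<alpha>*\<gamma>))" unfolding Nc_def FS_def .
  qed
  then show ?thesis using C r1 by blast
qed


lemma pack_pre_mono_adm:
  assumes "\<And>I. adm I \<Longrightarrow> adm' I"
  shows "pack_pre adm \<alpha> \<epsilon> E \<le> pack_pre adm' \<alpha> \<epsilon> E"
  unfolding pack_pre_def
  by (rule SUP_subset_mono) (use assms in \<open>auto simp: is_packing_def\<close>)

lemma pack0_mono_adm:
  assumes "\<And>I. adm I \<Longrightarrow> adm' I"
  shows "pack0 adm \<alpha> E \<le> pack0 adm' \<alpha> E"
  unfolding pack0_def by (rule INF_mono') (rule pack_pre_mono_adm[OF assms])

lemma pack_measure_mono_adm:
  assumes "\<And>I. adm I \<Longrightarrow> adm' I"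
  shows "pack_measure adm \<alpha> E \<le> pack_measure adm' \<alpha> E"
  unfolding pack_measure_def
proof (rule INF_mono')
  fix A :: "nat \<Rightarrow> real set"
  show "(\<Sum>j. pack0 adm \<alpha> (A j)) \<le> (\<Sum>j. pack0 adm' \<alpha> (A j))"
    by (rule suminf_le[OF pack0_mono_adm[OF assms] summableI summableI])
qed

lemma is_packing_mono_set:
  assumes "S \<subseteq> T" "is_packing adm \<epsilon> S P"
  shows "is_packing adm \<epsilon> T P"
  using assms unfolding is_packing_def by blast

lemma pack_pre_mono_set:
  assumes "S \<subseteq> T"
  shows "pack_pre adm \<alpha> \<epsilon> S \<le> pack_pre adm \<alpha> \<epsilon> T"
  unfolding pack_pre_def
  by (rule SUP_subset_mono) (use is_packing_mono_set[OF assms] in auto)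

lemma pack0_mono_set:
  assumes "S \<subseteq> T"
  shows "pack0 adm \<alpha> S \<le> pack0 adm \<alpha> T"
  unfolding pack0_def by (rule INF_mono') (rule pack_pre_mono_set[OF assms])

lemma pm_zero_cover:
  assumes "countable \<T>" "\<T> \<noteq> {}" "E \<subseteq> \<Union>\<T>" "\<And>T. T \<in> \<T> \<Longrightarrow> pack0 adm \<beta> T = 0"
  shows "pack_measure adm \<beta> E = 0"
proof -
  define A where "A = from_nat_into \<T>"
  have rA: "range A = \<T>" unfolding A_def using assms(1,2) by simp
  then have cov: "E \<subseteq> (\<Union>j. A j)" using assms(3) by simp
  have "pack_measure adm \<beta> E \<le> (\<Sum>j. pack0 adm \<beta> (A j))"
    unfolding pack_measure_def by (rule INF_lower) (simp add: cov)
  also have "\<dots> = (\<Sum>j. 0)"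
  proof -
    have "\<And>j. A j \<in> \<T>" using rA by (metis rangeI)
    then have "\<And>j. pack0 adm \<beta> (A j) = 0" using assms(4) by simp
    then show ?thesis by simp
  qed
  also have "\<dots> = 0" by (rule suminf_zero)
  finally show ?thesis by simp
qed

lemma packU_point:
  assumes "S \<subseteq> {p}" "S \<subseteq> {0..1}" "0 < \<beta>"
  shows "pack0 adm \<beta> S = 0"
proof (rule packU[OF assms(2), of 0 \<beta> 1 1])
  fix r :: real assume r: "0 < r" "r \<le> 1"
  have "(\<lambda>y. \<lfloor>y / r\<rfloor>) ` S \<subseteq> {\<lfloor>p / r\<rfloor>}" using assms(1) by auto
  then have "card ((\<lambda>y. \<lfloor>y / r\<rfloor>) ` S) \<le> 1"
    using card_mono[of "{\<lfloor>p / r\<rfloor>}"] by fastforce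
  then show "real (Nc S r) \<le> 1 * r powr (-0)" using r unfolding Nc_def by simp
qed (use assms in auto)

lemma packU_big:
  assumes "S \<subseteq> {0..1}" "1 < \<beta>"
  shows "pack0 adm \<beta> S = 0"
proof (rule packU[OF assms(1), of 1 \<beta> 2 1])
  fix r :: real assume r: "0 < r" "r \<le> 1"
  have "(\<lambda>y. \<lfloor>y / r\<rfloor>) ` S \<subseteq> {0..\<lfloor>1/r\<rfloor>}"
  proof
    fix k assume "k \<in> (\<lambda>y. \<lfloor>y / r\<rfloor>) ` S"
    then obtain y where y: "y \<in> S" "k = \<lfloor>y/r\<rfloor>" by auto
    with assms have "0 \<le> y" "y \<le> 1" by auto
    then have "0 \<le> y / r" "y / r \<le> 1 / r" using r by (auto simp: divide_right_mono)
    then show "k \<in> {0..\<lfloor>1/r\<rfloor>}" using y by (auto intro: floor_mono)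
  qed
  then have "card ((\<lambda>y. \<lfloor>y / r\<rfloor>) ` S) \<le> card {0..\<lfloor>1/r\<rfloor>}"
    by (intro card_mono) auto
  also have "card {0..\<lfloor>1/r\<rfloor>} = nat (\<lfloor>1/r\<rfloor> + 1)" by simp
  finally have "real (Nc S r) \<le> real (nat (\<lfloor>1/r\<rfloor> + 1))" unfolding Nc_def by linarith
  also have "\<dots> \<le> 1 / r + 1"
  proof -
    have "0 \<le> 1 / r" using r by simp
    then have "0 \<le> \<lfloor>1/r\<rfloor> + 1" by linarith
    then have "real (nat (\<lfloor>1/r\<rfloor> + 1)) = real_of_int (\<lfloor>1/r\<rfloor> + 1)" by simp
    also have "\<dots> \<le> 1 / r + 1" by linarith
    finally show ?thesis .
  qed
  also have "\<dots> \<le> 2 * r powr (-1)"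
  proof -
    have "1 \<le> 1 / r" using r by simp
    then have "1 / r + 1 \<le> 2 * (1 / r)" by linarith
    moreover have "r powr (-1) = 1 / r" using r by (simp add: powr_minus inverse_eq_divide)
    ultimately show ?thesis by simp
  qed
  finally show "real (Nc S r) \<le> 2 * r powr (-1)" .
qed (use assms in auto)

lemma dim_eq_abstract:
  assumes sub: "\<And>\<alpha>. pack_measure unc_adm \<alpha> E = 0 \<Longrightarrow> pack_measure adm \<alpha> E = 0"
    and big: "pack_measure unc_adm 2 E = 0"
    and bk: "\<And>\<alpha> \<beta>. 0 \<le> \<alpha> \<Longrightarrow> \<alpha> < \<beta> \<Longrightarrow> pack_measure adm \<alpha> E = 0 \<Longrightarrow> pack_measure unc_adm \<beta> E = 0"
  shows "pack_dim adm E = pack_dim unc_adm E"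
proof -
  define A where "A = {\<alpha>. \<alpha> \<ge> 0 \<and> pack_measure adm \<alpha> E = 0}"
  define U where "U = {\<alpha>. \<alpha> \<ge> 0 \<and> pack_measure unc_adm \<alpha> E = 0}"
  have dA: "pack_dim adm E = Inf A" unfolding A_def pack_dim_def by (rule refl)
  have dU: "pack_dim unc_adm E = Inf U" unfolding U_def pack_dim_def by (rule refl)
  have UA: "U \<subseteq> A" unfolding U_def A_def using sub by blast
  have U2: "2 \<in> U" unfolding U_def using big by simp
  have Une: "U \<noteq> {}" using U2 by blast
  have bA: "bdd_below A" unfolding A_def by (rule bdd_belowI[of _ 0]) blast
  have bU: "bdd_below U" unfolding U_def by (rule bdd_belowI[of _ 0]) blast
  have l1: "Inf A \<le> Inf U" by (rule cInf_superset_mono[OF Une bA UA])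
  have l2: "Inf U \<le> Inf A"
  proof (rule cInf_greatest)
    show "A \<noteq> {}" using UA Une by blast
  next
    fix \<alpha> assume "\<alpha> \<in> A"
    then have a: "0 \<le> \<alpha>" "pack_measure adm \<alpha> E = 0" unfolding A_def by auto
    show "Inf U \<le> \<alpha>"
    proof (rule field_le_epsilon)
      fix t :: real assume t: "0 < t"
      have "pack_measure unc_adm (\<alpha> + t) E = 0" by (rule bk[OF a(1) _ a(2)]) (use t in simp)
      then have "\<alpha> + t \<in> U" unfolding U_def using a(1) t by simp
      then show "Inf U \<le> \<alpha> + t" using bU by (rule cInf_lower)
    qed
  qed
  show ?thesis unfolding dA dU using l1 l2 by (rule antisym)
qed



locale qx =
  fixes N :: "nat \<Rightarrow> nat" and q :: "nat \<Rightarrow> nat \<Rightarrow> real" and \<delta> :: real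
  assumes Q: "Qexp N q" and dpos: "0 < \<delta>" and dle: "\<And>k i. i < N k \<Longrightarrow> \<delta> \<le> q i k"
begin

lemma N2: "2 \<le> N k" using Q unfolding Qexp_def by auto
lemma qpos: "i < N k \<Longrightarrow> 0 < q i k" using Q unfolding Qexp_def by auto
lemma qsum: "(\<Sum>i<N k. q i k) = 1" using Q unfolding Qexp_def by auto

lemma beta_Suc: "Qbeta q (Suc i) k = Qbeta q i k + q i k"
  unfolding Qbeta_def by simp

lemma beta_N: "Qbeta q (N k) k = 1" unfolding Qbeta_def using qsum by simp

lemma beta_0: "Qbeta q 0 k = 0" unfolding Qbeta_def by simp

lemma beta_mono: "i \<le> j \<Longrightarrow> j \<le> N k \<Longrightarrow> Qbeta q i k \<le> Qbeta q j k"
proof (induction j rule: dec_induct)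
  case base then show ?case by simp
next
  case (step j)
  then have "0 < q j k" using qpos by simp
  then show ?case using step beta_Suc[of j k] by simp
qed

lemma beta_nonneg: "i \<le> N k \<Longrightarrow> 0 \<le> Qbeta q i k"
  using beta_mono[of 0 i k] beta_0 by simp

lemma beta_le1: "i \<le> N k \<Longrightarrow> Qbeta q i k \<le> 1"
  using beta_mono[of i "N k" k] beta_N by simp

lemma beta_lt1: "i < N k \<Longrightarrow> Qbeta q i k < 1"
proof -
  assume i: "i < N k"
  have "Qbeta q (Suc i) k \<le> 1" using i beta_le1[of "Suc i" k] by simp
  then show ?thesis using beta_Suc[of i k] qpos[OF i] by simp
qed

lemma q_le: "i < N k \<Longrightarrow> q i k \<le> 1 - \<delta>"
proof -
  assume i: "i < N k"
  obtain j where j: "j < N k" "j \<noteq> i"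
    using N2[of k] i by (metis One_nat_def lessI less_le_trans nat_neq_iff numeral_2_eq_2 zero_less_Suc)
  have "q i k + q j k = (\<Sum>l\<in>{i,j}. q l k)" using j by simp
  also have "\<dots> \<le> (\<Sum>l<N k. q l k)"
    using i j by (intro sum_mono2) (auto intro: less_imp_le qpos)
  finally show ?thesis using qsum dle[OF j(1)] by simp
qed

lemma d_le: "\<delta> \<le> 1/2"
proof -
  have "0 < N 0" using N2[of 0] by simp
  then have "\<delta> \<le> q 0 0" "q 0 0 \<le> 1 - \<delta>" using dle q_le by auto
  then show ?thesis by simp
qed

lemma len_Suc: "cyl_len q c (Suc n) = cyl_len q c n * q (c n) n"
  unfolding cyl_len_def by simp

lemma left_Suc: "cyl_left q c (Suc n) = cyl_left q c n + Qbeta q (c n) n * cyl_len q c n"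
  unfolding cyl_left_def cyl_len_def by simp

lemma left_0: "cyl_left q c 0 = 0" unfolding cyl_left_def by simp
lemma len_0: "cyl_len q c 0 = 1" unfolding cyl_len_def by simp

context
  fixes c assumes c: "digit_seq N c"
begin

lemma cn: "c n < N n" using c unfolding digit_seq_def by auto

lemma len_pos: "0 < cyl_len q c n"
proof (induction n)
  case 0 then show ?case by (simp add: len_0)
next
  case (Suc n) then show ?case using qpos[OF cn[of n]] by (simp add: len_Suc)
qed

lemma len_ge: "\<delta>^n \<le> cyl_len q c n"
proof (induction n)
  case 0 then show ?case by (simp add: len_0)
next
  case (Suc n)
  have "\<delta>^(Suc n) = \<delta>^n * \<delta>" by simp
  also have "\<dots> \<le> cyl_len q c n * q (c n) n"
    using Suc dle[OF cn] dpos len_pos[of n] by (intro mult_mono) auto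
  finally show ?case by (simp add: len_Suc)
qed

lemma len_le: "cyl_len q c n \<le> (1 - \<delta>)^n"
proof (induction n)
  case 0 then show ?case by (simp add: len_0)
next
  case (Suc n)
  have "cyl_len q c n * q (c n) n \<le> (1 - \<delta>)^n * (1 - \<delta>)"
    using Suc q_le[OF cn] len_pos[of n] qpos[OF cn, of n] d_le by (intro mult_mono) auto
  then show ?case by (simp add: len_Suc mult.commute)
qed

lemma len_Suc_ge: "\<delta> * cyl_len q c n \<le> cyl_len q c (Suc n)"
  using dle[OF cn, of n] len_pos[of n] by (simp add: len_Suc mult.commute)

lemma left_nonneg: "0 \<le> cyl_left q c n"
proof (induction n)
  case 0 then show ?case by (simp add: left_0)
next
  case (Suc n)
  have "0 \<le> Qbeta q (c n) n" using cn[of n] by (intro beta_nonneg) simp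
  then have "0 \<le> Qbeta q (c n) n * cyl_len q c n" using len_pos[of n] by simp
  then show ?case using Suc by (simp add: left_Suc)
qed

lemma right_Suc: "cyl_left q c (Suc n) + cyl_len q c (Suc n) = cyl_left q c n + Qbeta q (Suc (c n)) n * cyl_len q c n"
  by (simp add: left_Suc len_Suc beta_Suc algebra_simps)

lemma right_Suc_le: "cyl_left q c (Suc n) + cyl_len q c (Suc n) \<le> cyl_left q c n + cyl_len q c n"
proof -
  have "Qbeta q (Suc (c n)) n \<le> 1" using cn[of n] by (intro beta_le1) simp
  then show ?thesis unfolding right_Suc using len_pos[of n] by (simp add: mult_le_cancel_right1)
qed

lemma right_Suc_lt: "Suc (c n) < N n \<Longrightarrow> cyl_left q c (Suc n) + cyl_len q c (Suc n) < cyl_left q c n + cyl_len q c n"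
proof -
  assume "Suc (c n) < N n"
  then have "Qbeta q (Suc (c n)) n < 1" by (rule beta_lt1)
  then show ?thesis unfolding right_Suc using len_pos[of n] by (simp add: mult_less_cancel_right1)
qed

lemma left_Suc_ge: "cyl_left q c n \<le> cyl_left q c (Suc n)"
  unfolding left_Suc using beta_nonneg[of "c n" n] cn[of n] len_pos[of n] by simp

lemma left_mono: "m \<le> n \<Longrightarrow> cyl_left q c m \<le> cyl_left q c n"
  by (rule lift_Suc_mono_le[of "cyl_left q c"]) (use left_Suc_ge in auto)

lemma right_mono: "m \<le> n \<Longrightarrow> cyl_left q c n + cyl_len q c n \<le> cyl_left q c m + cyl_len q c m"
  by (rule lift_Suc_antimono_le[of "\<lambda>n. cyl_left q c n + cyl_len q c n"]) (use right_Suc_le in auto)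

lemma right_le1: "cyl_left q c n + cyl_len q c n \<le> 1"
  using right_mono[of 0 n] by (simp add: left_0 len_0)

end
end

context qx begin

lemma seq_exists:
  assumes P0: "P 0 0 1"
    and step: "\<And>n l L. P n l L \<Longrightarrow> \<exists>i<N n. P (Suc n) (l + Qbeta q i n * L) (L * q i n)"
  shows "\<exists>c. digit_seq N c \<and> (\<forall>n. P n (cyl_left q c n) (cyl_len q c n))"
proof -
  define ch where "ch n l L = (SOME i. i < N n \<and> P (Suc n) (l + Qbeta q i n * L) (L * q i n))" for n l L
  have ch: "ch n l L < N n \<and> P (Suc n) (l + Qbeta q (ch n l L) n * L) (L * q (ch n l L) n)"
    if "P n l L" for n l L
    unfolding ch_def using step[OF that] by (rule someI_ex[where P = "\<lambda>i. i < N n \<and> P (Suc n) (l + Qbeta q i n * L) (L * q i n)"])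
  define st where "st = rec_nat ((0::real), (1::real)) (\<lambda>n s. (fst s + Qbeta q (ch n (fst s) (snd s)) n * snd s, snd s * q (ch n (fst s) (snd s)) n))"
  have st0: "st 0 = (0, 1)" unfolding st_def by simp
  have stS: "st (Suc n) = (fst (st n) + Qbeta q (ch n (fst (st n)) (snd (st n))) n * snd (st n), snd (st n) * q (ch n (fst (st n)) (snd (st n))) n)" for n
    unfolding st_def by simp
  define c where "c n = ch n (fst (st n)) (snd (st n))" for n
  have Pst: "P n (fst (st n)) (snd (st n))" for n
  proof (induction n)
    case 0 then show ?case using P0 st0 by simp
  next
    case (Suc n) then show ?case using ch[OF Suc] unfolding stS by simp
  qed
  have cN: "c n < N n" for n unfolding c_def using ch[OF Pst] by blast
  have eq: "st n = (cyl_left q c n, cyl_len q c n)" for n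
  proof (induction n)
    case 0 then show ?case using st0 by (simp add: left_0 len_0)
  next
    case (Suc n) then show ?case unfolding stS left_Suc len_Suc c_def by simp
  qed
  show ?thesis
    using Pst eq cN unfolding digit_seq_def by (intro exI[of _ c]) (metis fst_conv snd_conv)
qed

lemma coding_right:
  assumes "0 \<le> x" "x < 1"
  shows "\<exists>c. digit_seq N c \<and> (\<forall>n. cyl_left q c n \<le> x \<and> x < cyl_left q c n + cyl_len q c n)"
proof -
  have "\<exists>c. digit_seq N c \<and> (\<forall>n. (\<lambda>n l L. l \<le> x \<and> x < l + L) n (cyl_left q c n) (cyl_len q c n))"
  proof (rule seq_exists)
    show "0 \<le> x \<and> x < 0 + 1" using assms by simp
  next
    fix n and l L :: real assume h: "l \<le> x \<and> x < l + L"
    define I where "I = {i. i < N n \<and> l + Qbeta q i n * L \<le> x}"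
    have finI: "finite I" unfolding I_def by simp
    have "0 \<in> I" unfolding I_def using h N2[of n] by (simp add: beta_0)
    then have neI: "I \<noteq> {}" by blast
    define i where "i = Max I"
    have iI: "i \<in> I" unfolding i_def using finI neI by (rule Max_in)
    then have i: "i < N n" "l + Qbeta q i n * L \<le> x" unfolding I_def by auto
    have "x < l + Qbeta q (Suc i) n * L"
    proof (cases "Suc i < N n")
      case True
      have "Suc i \<notin> I"
      proof
        assume "Suc i \<in> I"
        then have "Suc i \<le> i" unfolding i_def using finI by (simp add: Max_ge)
        then show False by simp
      qed
      then show ?thesis using True unfolding I_def by auto
    next
      case False
      then have "Suc i = N n" using i by simp
      then show ?thesis using h beta_N[of n] by simp
    qed
    then have "l + Qbeta q i n * L \<le> x \<and> x < (l + Qbeta q i n * L) + L * q i n"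
      using i by (simp add: beta_Suc algebra_simps)
    then show "\<exists>i<N n. (\<lambda>n l L. l \<le> x \<and> x < l + L) (Suc n) (l + Qbeta q i n * L) (L * q i n)"
      using i by blast
  qed
  then show ?thesis by simp
qed

lemma coding_left:
  assumes "0 < x" "x \<le> 1"
  shows "\<exists>c. digit_seq N c \<and> (\<forall>n. cyl_left q c n < x \<and> x \<le> cyl_left q c n + cyl_len q c n)"
proof -
  have "\<exists>c. digit_seq N c \<and> (\<forall>n. (\<lambda>n l L. l < x \<and> x \<le> l + L) n (cyl_left q c n) (cyl_len q c n))"
  proof (rule seq_exists)
    show "0 < x \<and> x \<le> 0 + 1" using assms by simp
  next
    fix n and l L :: real assume h: "l < x \<and> x \<le> l + L"
    define I where "I = {i. i < N n \<and> l + Qbeta q i n * L < x}"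
    have finI: "finite I" unfolding I_def by simp
    have "0 \<in> I" unfolding I_def using h N2[of n] by (simp add: beta_0)
    then have neI: "I \<noteq> {}" by blast
    define i where "i = Max I"
    have iI: "i \<in> I" unfolding i_def using finI neI by (rule Max_in)
    then have i: "i < N n" "l + Qbeta q i n * L < x" unfolding I_def by auto
    have "x \<le> l + Qbeta q (Suc i) n * L"
    proof (cases "Suc i < N n")
      case True
      have "Suc i \<notin> I"
      proof
        assume "Suc i \<in> I"
        then have "Suc i \<le> i" unfolding i_def using finI by (simp add: Max_ge)
        then show False by simp
      qed
      then show ?thesis using True unfolding I_def by auto
    next
      case False
      then have "Suc i = N n" using i by simp
      then show ?thesis using h beta_N[of n] by simp
    qed
    then have "l + Qbeta q i n * L < x \<and> x \<le> (l + Qbeta q i n * L) + L * q i n"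
      using i by (simp add: beta_Suc algebra_simps)
    then show "\<exists>i<N n. (\<lambda>n l L. l < x \<and> x \<le> l + L) (Suc n) (l + Qbeta q i n * L) (L * q i n)"
      using i by blast
  qed
  then show ?thesis by simp
qed

end


lemma (in qx) coding_closed:
  assumes "0 \<le> x" "x \<le> 1"
  shows "\<exists>c. digit_seq N c \<and> (\<forall>n. cyl_left q c n \<le> x \<and> x \<le> cyl_left q c n + cyl_len q c n)"
proof (cases "x < 1")
  case True then show ?thesis using coding_right[OF assms(1) True] by (meson less_imp_le)
next
  case False then have "x = 1" using assms by simp
  then obtain c where "digit_seq N c" "\<forall>n. cyl_left q c n < x \<and> x \<le> cyl_left q c n + cyl_len q c n"
    using coding_left[of x] by auto
  then show ?thesis by (meson less_imp_le)
qed

lemma prod_counting: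
  fixes p0 pm :: "nat \<Rightarrow> real"
  assumes p: "\<And>j. 0 \<le> p0 j \<and> 0 \<le> pm j \<and> p0 j + pm j \<le> 1" and a: "0 < a"
    and ap: "\<And>n. a \<le> (\<Prod>j<n. pm j)" and \<theta>: "0 < \<theta>" "\<theta> < 1"
  shows "\<exists>K. \<forall>n. (\<Prod>j<n. p0 j) \<le> \<theta>^(n - K)"
proof -
  obtain K where K: "(1 - \<theta>)^K < a" using real_arch_pow_inv[OF a, of "1 - \<theta>"] \<theta> by auto
  have "(\<Prod>j<n. p0 j) \<le> \<theta>^(n - K)" for n
  proof -
    define A where "A = {..<n}"
    define B where "B = {j. \<theta> < p0 j}"
    have finA: "finite A" unfolding A_def by simp
    have "(\<Prod>j\<in>A. pm j) = (\<Prod>j\<in>A \<inter> B. pm j) * (\<Prod>j\<in>A - B. pm j)"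
      using finA by (rule prod.Int_Diff)
    also have "\<dots> \<le> (\<Prod>j\<in>A \<inter> B. pm j) * 1"
    proof (rule mult_left_mono)
      show "(\<Prod>j\<in>A - B. pm j) \<le> 1"
      proof (rule prod_le_1)
        fix j show "0 \<le> pm j \<and> pm j \<le> 1" using p[of j] by linarith
      qed
      show "0 \<le> (\<Prod>j\<in>A \<inter> B. pm j)" using p by (intro prod_nonneg) blast
    qed
    also have "\<dots> \<le> (\<Prod>j\<in>A \<inter> B. (1 - \<theta>))"
    proof -
      have "(\<Prod>j\<in>A \<inter> B. pm j) \<le> (\<Prod>j\<in>A \<inter> B. (1 - \<theta>))"
      proof (rule prod_mono)
        fix j assume "j \<in> A \<inter> B"
        then have "\<theta> < p0 j" unfolding B_def by simp
        then show "0 \<le> pm j \<and> pm j \<le> 1 - \<theta>" using p[of j] by linarith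
      qed
      then show ?thesis by simp
    qed
    also have "\<dots> = (1 - \<theta>)^card (A \<inter> B)" by simp
    finally have "a \<le> (1 - \<theta>)^card (A \<inter> B)" using ap[of n] unfolding A_def by linarith
    then have cB: "card (A \<inter> B) < K"
    proof (rule contrapos_pp)
      assume "\<not> card (A \<inter> B) < K"
      then have "(1 - \<theta>)^card (A \<inter> B) \<le> (1 - \<theta>)^K" using \<theta> by (intro power_decreasing) auto
      then show "\<not> a \<le> (1 - \<theta>)^card (A \<inter> B)" using K by linarith
    qed
    have cAB: "card (A - B) = n - card (A \<inter> B)"
    proof -
      have "card A = card (A \<inter> B) + card (A - B)" using finA by (rule card_Int_Diff)
      then show ?thesis unfolding A_def by simp
    qed
    have "(\<Prod>j\<in>A. p0 j) = (\<Prod>j\<in>A \<inter> B. p0 j) * (\<Prod>j\<in>A - B. p0 j)"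
      using finA by (rule prod.Int_Diff)
    also have "\<dots> \<le> 1 * (\<Prod>j\<in>A - B. p0 j)"
    proof (rule mult_right_mono)
      show "(\<Prod>j\<in>A \<inter> B. p0 j) \<le> 1"
      proof (rule prod_le_1)
        fix j show "0 \<le> p0 j \<and> p0 j \<le> 1" using p[of j] by linarith
      qed
      show "0 \<le> (\<Prod>j\<in>A - B. p0 j)" using p by (intro prod_nonneg) blast
    qed
    also have "\<dots> \<le> (\<Prod>j\<in>A - B. \<theta>)"
    proof -
      have "(\<Prod>j\<in>A - B. p0 j) \<le> (\<Prod>j\<in>A - B. \<theta>)"
      proof (rule prod_mono)
        fix j assume "j \<in> A - B"
        then have "\<not> \<theta> < p0 j" unfolding B_def by simp
        then show "0 \<le> p0 j \<and> p0 j \<le> \<theta>" using p[of j] by linarith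
      qed
      then show ?thesis by simp
    qed
    also have "\<dots> = \<theta>^card (A - B)" by simp
    also have "\<dots> \<le> \<theta>^(n - K)"
      using \<theta> cB cAB by (intro power_decreasing) auto
    finally show ?thesis unfolding A_def .
  qed
  then show ?thesis by blast
qed

locale qxF = qx +
  fixes F :: "real \<Rightarrow> real"
  assumes Fmono: "mono F"
    and limF: "\<forall>x\<in>{0..1}. \<forall>c. digit_seq N c \<and> (\<forall>n. x \<in> cylinder q n c) \<longrightarrow>
        (\<lambda>n. ln (F (cyl_left q c n + cyl_len q c n) - F (cyl_left q c n)) / ln (cyl_len q c n)) \<longlonglongrightarrow> 1"
begin

abbreviation "lf c n \<equiv> cyl_left q c n"
abbreviation "rt c n \<equiv> cyl_left q c n + cyl_len q c n"
abbreviation "dF c n \<equiv> F (rt c n) - F (lf c n)"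

lemma dF_nonneg: "digit_seq N c \<Longrightarrow> 0 \<le> dF c n"
  using Fmono len_pos[of c n] unfolding mono_def by simp

lemma dF_anti: "digit_seq N c \<Longrightarrow> k \<le> m \<Longrightarrow> dF c m \<le> dF c k"
  using Fmono left_mono[of c k m] right_mono[of c k m] unfolding mono_def
  by (metis diff_mono)

lemma len_lt1: "digit_seq N c \<Longrightarrow> 1 \<le> n \<Longrightarrow> cyl_len q c n < 1"
proof -
  assume c: "digit_seq N c" and n: "1 \<le> n"
  have "(1 - \<delta>)^n \<le> (1 - \<delta>)^1" using n dpos d_le by (intro power_decreasing) auto
  then have "(1 - \<delta>)^n < 1" using dpos by simp
  then show ?thesis using len_le[OF c, of n] by simp
qed

lemma ratio_bounds:
  assumes c: "digit_seq N c" and x: "0 \<le> x" "x \<le> 1" and xc: "\<forall>n. lf c n \<le> x \<and> x \<le> rt c n"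
    and t: "1 < t"
  shows "\<exists>m. \<forall>n\<ge>m. cyl_len q c n powr t \<le> dF c n \<and> dF c n \<le> cyl_len q c n powr (1/t)"
proof -
  have "\<forall>n. x \<in> cylinder q n c" using xc unfolding cylinder_def by auto
  then have lim: "(\<lambda>n. ln (dF c n) / ln (cyl_len q c n)) \<longlonglongrightarrow> 1"
    using limF x c by auto
  have "1/t < 1" using t by simp
  then have ev1: "eventually (\<lambda>n. 1/t < ln (dF c n) / ln (cyl_len q c n)) sequentially"
    by (rule order_tendstoD(1)[OF lim])
  have ev2: "eventually (\<lambda>n. ln (dF c n) / ln (cyl_len q c n) < t) sequentially"
    using lim t by (rule order_tendstoD(2))
  have ev3: "eventually (\<lambda>n. 1 \<le> n) sequentially" by (rule eventually_ge_at_top)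
  obtain m where m: "\<And>n. n \<ge> m \<Longrightarrow> 1/t < ln (dF c n) / ln (cyl_len q c n) \<and> ln (dF c n) / ln (cyl_len q c n) < t \<and> 1 \<le> n"
    using eventually_conj[OF ev1 eventually_conj[OF ev2 ev3]] unfolding eventually_sequentially by blast
  have "cyl_len q c n powr t \<le> dF c n \<and> dF c n \<le> cyl_len q c n powr (1/t)" if n: "n \<ge> m" for n
  proof -
    define L where "L = cyl_len q c n"
    define D where "D = dF c n"
    have L0: "0 < L" "L < 1" unfolding L_def using len_pos[OF c] len_lt1[OF c] m[OF n] by auto
    have lnL: "ln L < 0" using L0 by simp
    have r1: "1/t < ln D / ln L" and r2: "ln D / ln L < t" using m[OF n] unfolding D_def L_def by auto
    have D0: "0 < D"
    proof (rule ccontr)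
      assume "\<not> 0 < D"
      moreover have "0 \<le> D" using dF_nonneg[OF c] unfolding D_def by blast
      ultimately have "D = 0" by linarith
      then show False using r1 t by simp
    qed
    have a: "t * ln L < ln D" using r2 lnL by (simp add: divide_less_eq mult.commute)
    have b: "ln D < (1/t) * ln L" using r1 lnL by (simp add: less_divide_eq mult.commute)
    have "L powr t = exp (t * ln L)" using L0 by (simp add: powr_def mult.commute)
    also have "\<dots> < exp (ln D)" using a by simp
    also have "\<dots> = D" using D0 by simp
    finally have A: "L powr t < D" .
    have "D = exp (ln D)" using D0 by simp
    also have "\<dots> < exp ((1/t) * ln L)" using b by simp
    also have "\<dots> = L powr (1/t)" using L0 by (simp add: powr_def mult.commute)
    finally have B: "D < L powr (1/t)" .
    show ?thesis using A B unfolding L_def D_def by simp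
  qed
  then show ?thesis by blast
qed

lemma len_small:
  assumes c: "digit_seq N c" and e: "0 < e"
  shows "\<exists>n\<ge>m. cyl_len q c n < e"
proof -
  obtain n0 where n0: "(1 - \<delta>)^n0 < e" using real_arch_pow_inv[OF e, of "1 - \<delta>"] dpos by auto
  define n where "n = max n0 m"
  have "(1 - \<delta>)^n \<le> (1 - \<delta>)^n0" unfolding n_def using dpos d_le by (intro power_decreasing) auto
  then have "cyl_len q c n < e" using len_le[OF c, of n] n0 by linarith
  then show ?thesis unfolding n_def by (intro exI[of _ "max n0 m"]) auto
qed

lemma dF_small:
  assumes c: "digit_seq N c" and x: "0 \<le> x" "x \<le> 1" and xc: "\<forall>n. lf c n \<le> x \<and> x \<le> rt c n"
    and e: "0 < e"
  shows "\<exists>n. dF c n < e"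
proof -
  obtain m where m: "\<And>n. n \<ge> m \<Longrightarrow> dF c n \<le> cyl_len q c n powr (1/2)"
    using ratio_bounds[OF c x xc, of 2] by force
  have "0 < e powr 2" using e by simp
  then obtain n where n: "n \<ge> m" "cyl_len q c n < e powr 2" using len_small[OF c] by blast
  have "cyl_len q c n powr (1/2) < (e powr 2) powr (1/2)"
    using n(2) len_pos[OF c, of n] by (intro powr_less_mono2) auto
  also have "\<dots> = e" using e by (simp add: powr_powr)
  finally show ?thesis using m[OF n(1)] by (intro exI[of _ n]) linarith
qed

lemma F_cont: "continuous_on {0..1} F"
  unfolding continuous_on_iff
proof (intro ballI allI impI)
  fix x :: real and e :: real assume x: "x \<in> {0..1}" and e: "0 < e"
  have d1: "\<exists>d1>0. \<forall>x'. x \<le> x' \<and> x' < x + d1 \<longrightarrow> \<bar>F x' - F x\<bar> < e" if x1: "x < 1"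
  proof -
    obtain c where c: "digit_seq N c" "\<forall>n. lf c n \<le> x \<and> x < rt c n" using coding_right[of x] x x1 by auto
    have xc: "\<forall>n. lf c n \<le> x \<and> x \<le> rt c n" using c(2) by (auto intro: less_imp_le)
    obtain n where n: "dF c n < e" using dF_small[OF c(1) _ _ xc e] x by auto
    show ?thesis
    proof (intro exI[of _ "rt c n - x"] conjI allI impI)
      show "0 < rt c n - x" using c(2) by simp
      fix x' assume x': "x \<le> x' \<and> x' < x + (rt c n - x)"
      have "F x \<le> F x'" "F x' \<le> F (rt c n)" "F (lf c n) \<le> F x"
        using Fmono x' c(2) unfolding mono_def by auto
      then show "\<bar>F x' - F x\<bar> < e" using n by simp
    qed
  qed
  have d2: "\<exists>d2>0. \<forall>x'. x' \<le> x \<and> x - d2 < x' \<longrightarrow> \<bar>F x' - F x\<bar> < e" if x0: "0 < x"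
  proof -
    obtain c where c: "digit_seq N c" "\<forall>n. lf c n < x \<and> x \<le> rt c n" using coding_left[of x] x x0 by auto
    have xc: "\<forall>n. lf c n \<le> x \<and> x \<le> rt c n" using c(2) by (auto intro: less_imp_le)
    obtain n where n: "dF c n < e" using dF_small[OF c(1) _ _ xc e] x by auto
    show ?thesis
    proof (intro exI[of _ "x - lf c n"] conjI allI impI)
      show "0 < x - lf c n" using c(2) by simp
      fix x' assume x': "x' \<le> x \<and> x - (x - lf c n) < x'"
      have "F x' \<le> F x" "F x \<le> F (rt c n)" "F (lf c n) \<le> F x'"
        using Fmono x' c(2) unfolding mono_def by auto
      then show "\<bar>F x' - F x\<bar> < e" using n by simp
    qed
  qed
  obtain da where da: "0 < da" "\<forall>x'. x < 1 \<longrightarrow> x \<le> x' \<and> x' < x + da \<longrightarrow> \<bar>F x' - F x\<bar> < e"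
  proof (cases "x < 1")
    case True then show ?thesis using d1 that by blast
  next
    case False then show ?thesis using that[of 1] by simp
  qed
  obtain db where db: "0 < db" "\<forall>x'. 0 < x \<longrightarrow> x' \<le> x \<and> x - db < x' \<longrightarrow> \<bar>F x' - F x\<bar> < e"
  proof (cases "0 < x")
    case True then show ?thesis using d2 that by blast
  next
    case False then show ?thesis using that[of 1] by simp
  qed
  show "\<exists>d>0. \<forall>x'\<in>{0..1}. dist x' x < d \<longrightarrow> dist (F x') (F x) < e"
  proof (intro exI[of _ "min da db"] conjI ballI impI)
    show "0 < min da db" using da db by simp
    fix x' assume x': "x' \<in> {0..1}" "dist x' x < min da db"
    show "dist (F x') (F x) < e"
    proof (cases "x' = x")
      case True then show ?thesis using e by simp
    next
      case False
      show ?thesis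
      proof (cases "x < x'")
        case True
        then have "x < 1" using x' by simp
        then show ?thesis using da(2) x' True by (auto simp: dist_real_def)
      next
        case ne: False
        then have "x' < x" using False by simp
        then have "0 < x" using x' by simp
        then show ?thesis using db(2) x' \<open>x' < x\<close> by (auto simp: dist_real_def)
      qed
    qed
  qed
qed

definition Dset :: "real set" where
  "Dset = (\<lambda>(xs, n). F (cyl_left q (\<lambda>j. xs ! j) n)) ` UNIV
        \<union> (\<lambda>(xs, n). F (cyl_left q (\<lambda>j. xs ! j) n + cyl_len q (\<lambda>j. xs ! j) n)) ` UNIV"

lemma Dset_countable: "countable Dset"
  unfolding Dset_def by simp

lemma cyl_prefix:
  "cyl_left q c n = cyl_left q (\<lambda>j. map c [0..<n] ! j) n \<and> cyl_len q c n = cyl_len q (\<lambda>j. map c [0..<n] ! j) n"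
  unfolding cyl_left_def cyl_len_def
  by (intro conjI sum.cong prod.cong refl) auto

lemma in_Dset: "F (lf c n) \<in> Dset" "F (rt c n) \<in> Dset"
proof -
  have "F (lf c n) = (\<lambda>(xs, n). F (cyl_left q (\<lambda>j. xs ! j) n)) (map c [0..<n], n)"
    using cyl_prefix[of c n] by simp
  then show "F (lf c n) \<in> Dset" unfolding Dset_def by blast
  have "F (rt c n) = (\<lambda>(xs, n). F (cyl_left q (\<lambda>j. xs ! j) n + cyl_len q (\<lambda>j. xs ! j) n)) (map c [0..<n], n)"
    using cyl_prefix[of c n] by simp
  then show "F (rt c n) \<in> Dset" unfolding Dset_def by blast
qed

lemma good_interval:
  assumes c: "digit_seq N c" and yin: "\<forall>n. F (lf c n) < y \<and> y < F (rt c n)"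
    and t: "1 < t"
    and bnd: "\<forall>n\<ge>m. cyl_len q c n powr t \<le> dF c n \<and> dF c n \<le> cyl_len q c n powr (1/t)"
    and r: "0 < r" "r < (\<delta>^m) powr t"
  shows "\<exists>a b. Fcyl_adm N q F (a,b) \<and> a < y \<and> y < b \<and> b - a \<le> r \<and> (\<delta> powr t) * r powr (t*t) \<le> b - a"
proof -
  have ex: "\<exists>n. dF c n \<le> r"
  proof -
    have "0 < r powr t" using r by simp
    then obtain n where n: "n \<ge> m" "cyl_len q c n < r powr t" using len_small[OF c] by blast
    have "dF c n \<le> cyl_len q c n powr (1/t)" using bnd n(1) by blast
    also have "\<dots> < (r powr t) powr (1/t)"
      using n(2) len_pos[OF c, of n] t by (intro powr_less_mono2) auto
    also have "\<dots> = r" using r t by (simp add: powr_powr)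
    finally show ?thesis by (intro exI[of _ n]) simp
  qed
  define n where "n = (LEAST n. dF c n \<le> r)"
  have nr: "dF c n \<le> r" unfolding n_def using ex by (rule LeastI_ex)
  have mn: "m < n"
  proof (rule ccontr)
    assume "\<not> m < n"
    then have "n \<le> m" by simp
    then have "dF c m \<le> dF c n" by (rule dF_anti[OF c])
    moreover have "(\<delta>^m) powr t \<le> cyl_len q c m powr t"
      using len_ge[OF c, of m] dpos t by (intro powr_mono2) auto
    moreover have "cyl_len q c m powr t \<le> dF c m" using bnd by blast
    ultimately show False using nr r by linarith
  qed
  then obtain p where p1: "n = Suc p" by (cases n) auto
  with mn have p: "n = Suc p" "m \<le> p" by auto
  have "\<not> dF c p \<le> r"
  proof
    assume "dF c p \<le> r"
    then have "n \<le> p" unfolding n_def by (rule Least_le)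
    then show False using p by simp
  qed
  moreover have "dF c p \<le> cyl_len q c p powr (1/t)" using bnd p(2) by blast
  ultimately have "r < cyl_len q c p powr (1/t)" by linarith
  then have "r powr t < (cyl_len q c p powr (1/t)) powr t"
    using r t by (intro powr_less_mono2) auto
  also have "\<dots> = cyl_len q c p" using t len_pos[OF c, of p] by (simp add: powr_powr)
  finally have Lp: "r powr t < cyl_len q c p" .
  have "\<delta> * r powr t \<le> \<delta> * cyl_len q c p" using Lp dpos by simp
  then have "\<delta> * r powr t \<le> cyl_len q c n"
    using len_Suc_ge[OF c, of p] p(1) by simp
  then have "(\<delta> * r powr t) powr t \<le> cyl_len q c n powr t"
    using dpos r t by (intro powr_mono2) auto
  moreover have "(\<delta> * r powr t) powr t = \<delta> powr t * r powr (t * t)"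
    using dpos r by (simp add: powr_mult powr_powr)
  moreover have "cyl_len q c n powr t \<le> dF c n" using bnd mn by simp
  ultimately have lo: "\<delta> powr t * r powr (t * t) \<le> dF c n" by linarith
  have adm: "Fcyl_adm N q F (F (lf c n), F (rt c n))"
    unfolding Fcyl_adm_def using c by blast
  show ?thesis using adm yin nr lo by blast
qed

lemma choose_t:
  assumes "0 \<le> \<alpha>" "\<alpha> < \<beta>"
  shows "\<exists>t>1. \<alpha> * (t * t) < (\<beta>::real)"
proof (cases "\<alpha> = 0")
  case True then show ?thesis using assms by (intro exI[of _ 2]) auto
next
  case False
  then have a: "0 < \<alpha>" using assms by simp
  define b where "b = (\<alpha> + \<beta>) / 2"
  have b: "\<alpha> < b" "b < \<beta>" unfolding b_def using assms by auto
  define t where "t = sqrt (b / \<alpha>)"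
  have "1 < b / \<alpha>" using a b by simp
  then have "1 < t" unfolding t_def by simp
  moreover have "t * t = b / \<alpha>" unfolding t_def using a b by simp
  then have "\<alpha> * (t * t) = b" using a by simp
  ultimately show ?thesis using b by (intro exI[of _ t]) auto
qed

lemma back_dir:
  assumes F01: "F 0 \<le> 0" "1 \<le> F 1" and E: "E \<subseteq> {0..1}" and \<alpha>: "0 \<le> \<alpha>" "\<alpha> < \<beta>"
    and pm: "pack_measure (Fcyl_adm N q F) \<alpha> E = 0"
  shows "pack_measure unc_adm \<beta> E = 0"
proof -
  let ?adm = "Fcyl_adm N q F"
  have "pack_measure ?adm \<alpha> E < \<top>" using pm by simp
  then obtain A where A: "E \<subseteq> (\<Union>j. A j)" "(\<Sum>j. pack0 ?adm \<alpha> (A j)) < \<top>"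
    unfolding pack_measure_def by (auto simp: INF_less_iff)
  have finA: "pack0 ?adm \<alpha> (A j) < \<top>" for j using A(2) by (rule ennreal_suminf_lessD)
  obtain t where t: "1 < t" "\<alpha> * (t * t) < \<beta>" using choose_t[OF \<alpha>] by blast
  define G where "G m = {y. \<exists>c. digit_seq N c \<and> (\<forall>n. F (lf c n) < y \<and> y < F (rt c n))
      \<and> (\<forall>n\<ge>m. cyl_len q c n powr t \<le> dF c n \<and> dF c n \<le> cyl_len q c n powr (1/t))}" for m
  define T where "T jm = A (fst jm) \<inter> E \<inter> G (snd jm)" for jm :: "nat \<times> nat"
  have T0: "pack0 unc_adm \<beta> (T jm) = 0" for jm
  proof -
    obtain j m where jm: "jm = (j, m)" by (cases jm)
    have TS: "T jm \<subseteq> {0..1}" unfolding T_def using E by auto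
    have "pack0 ?adm \<alpha> (T jm) \<le> pack0 ?adm \<alpha> (A j)"
      by (rule pack0_mono_set) (auto simp: T_def jm)
    then have fT: "pack0 ?adm \<alpha> (T jm) < \<top>"
      using finA[of j] by (rule le_less_trans)
    have r0: "0 < (\<delta>^m) powr t" using dpos by simp
    have good: "\<exists>a b. ?adm (a,b) \<and> a < y \<and> y < b \<and> b - a \<le> r \<and> (\<delta> powr t) * r powr (t*t) \<le> b - a"
      if "y \<in> T jm" "0 < r" "r < (\<delta>^m) powr t" for y r
    proof -
      from that(1) obtain c where c: "digit_seq N c" "\<forall>n. F (lf c n) < y \<and> y < F (rt c n)"
        "\<forall>n\<ge>m. cyl_len q c n powr t \<le> dF c n \<and> dF c n \<le> cyl_len q c n powr (1/t)"
        unfolding T_def G_def jm by auto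
      show ?thesis using good_interval[OF c(1) c(2) t(1) c(3) that(2,3)] .
    qed
    obtain C r1 where Cr: "0 \<le> C" "0 < r1" "\<forall>r. 0 < r \<longrightarrow> r \<le> r1 \<longrightarrow> real (Nc (T jm) r) \<le> C * r powr (-(\<alpha>*(t*t)))"
      using packB[OF TS \<alpha>(1) _ r0 good fT] dpos by auto
    show ?thesis
      by (rule packU[OF TS _ t(2) Cr(1) Cr(2)]) (use Cr(3) \<alpha> t in auto)
  qed
  have P0: "pack0 unc_adm \<beta> ({p} \<inter> E) = 0" for p
    using E \<alpha> by (intro packU_point) auto
  define \<T> where "\<T> = range T \<union> (\<lambda>p. {p} \<inter> E) ` Dset"
  have cT: "countable \<T>" unfolding \<T>_def using Dset_countable by simp
  have neT: "\<T> \<noteq> {}" unfolding \<T>_def by simp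
  have cov: "E \<subseteq> \<Union>\<T>"
  proof
    fix y assume yE: "y \<in> E"
    show "y \<in> \<Union>\<T>"
    proof (cases "y \<in> Dset")
      case True then show ?thesis using yE unfolding \<T>_def by blast
    next
      case False
      have y01: "0 \<le> y" "y \<le> 1" using yE E by auto
      obtain x where x: "0 \<le> x" "x \<le> 1" "F x = y"
        using IVT'[of F 0 y 1] F_cont F01 y01 by auto
      obtain c where c: "digit_seq N c" "\<forall>n. lf c n \<le> x \<and> x \<le> rt c n"
        using coding_closed[OF x(1,2)] by blast
      obtain m where m: "\<forall>n\<ge>m. cyl_len q c n powr t \<le> dF c n \<and> dF c n \<le> cyl_len q c n powr (1/t)"
        using ratio_bounds[OF c(1) x(1,2) c(2) t(1)] by blast
      have yin: "\<forall>n. F (lf c n) < y \<and> y < F (rt c n)"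
      proof
        fix n
        have "F (lf c n) \<le> y" "y \<le> F (rt c n)" using c(2) Fmono x(3) unfolding mono_def by auto
        moreover have "F (lf c n) \<noteq> y" "F (rt c n) \<noteq> y" using in_Dset[of c n] False by auto
        ultimately show "F (lf c n) < y \<and> y < F (rt c n)" by auto
      qed
      have "y \<in> G m" unfolding G_def using c(1) yin m by blast
      moreover obtain j where "y \<in> A j" using A(1) yE by blast
      ultimately have "y \<in> T (j, m)" unfolding T_def using yE by simp
      then show ?thesis unfolding \<T>_def by blast
    qed
  qed
  show ?thesis
  proof (rule pm_zero_cover[OF cT neT cov])
    fix S assume "S \<in> \<T>"
    then show "pack0 unc_adm \<beta> S = 0" unfolding \<T>_def using T0 P0 by auto
  qed
qed

lemma dim_F:
  assumes F01: "F 0 \<le> 0" "1 \<le> F 1" and E: "E \<subseteq> {0..1}"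
  shows "pack_dim (Fcyl_adm N q F) E = pack_dim unc_adm E"
proof (rule dim_eq_abstract)
  fix \<alpha> assume "pack_measure unc_adm \<alpha> E = 0"
  moreover have "pack_measure (Fcyl_adm N q F) \<alpha> E \<le> pack_measure unc_adm \<alpha> E"
    by (rule pack_measure_mono_adm) (simp add: unc_adm_def)
  ultimately show "pack_measure (Fcyl_adm N q F) \<alpha> E = 0" by simp
next
  show "pack_measure unc_adm 2 E = 0"
    by (rule pm_zero_cover[of "{E}"]) (use E packU_big[OF E, of 2] in auto)
next
  fix \<alpha> \<beta> :: real assume "0 \<le> \<alpha>" "\<alpha> < \<beta>" "pack_measure (Fcyl_adm N q F) \<alpha> E = 0"
  then show "pack_measure unc_adm \<beta> E = 0" using back_dir[OF F01 E] by blast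
qed

lemma F1_contra:
  fixes p0 pm :: "nat \<Rightarrow> real"
  assumes p: "\<And>j. 0 \<le> p0 j \<and> 0 \<le> pm j \<and> p0 j + pm j \<le> 1" and a: "0 < a"
    and ap: "\<And>n. a \<le> (\<Prod>j<n. pm j)"
    and dz: "\<And>n. dF (\<lambda>_. 0) n \<le> (\<Prod>j<n. p0 j)"
  shows False
proof -
  define z where "z = (\<lambda>_::nat. 0::nat)"
  have zc: "digit_seq N z" unfolding digit_seq_def z_def using N2 by (metis le_trans less_2_cases_iff not_less zero_less_iff_neq_zero)
  have lz: "lf z n = 0" for n unfolding cyl_left_def z_def by (simp add: beta_0)
  have xc: "\<forall>n. lf z n \<le> 0 \<and> 0 \<le> rt z n" using lz len_pos[OF zc] by (simp add: less_imp_le)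
  define \<theta> where "\<theta> = \<delta>^3"
  have \<theta>: "0 < \<theta>" "\<theta> < 1" unfolding \<theta>_def using dpos d_le by (auto simp: power_less_one_iff)
  obtain K where K: "\<And>n. (\<Prod>j<n. p0 j) \<le> \<theta>^(n - K)" using prod_counting[OF p a ap \<theta>] by blast
  obtain m where m: "\<forall>n\<ge>m. cyl_len q z n powr 2 \<le> dF z n \<and> dF z n \<le> cyl_len q z n powr (1/2)"
    using ratio_bounds[OF zc _ _ xc, of 2] by auto
  define n where "n = m + 3 * K + 1"
  have "\<delta>^(2*n) = (\<delta>^n)^2" by (simp add: power_mult mult.commute)
  also have "\<dots> \<le> (cyl_len q z n)^2"
    using len_ge[OF zc, of n] dpos by (intro power_mono) auto
  also have "\<dots> = cyl_len q z n powr 2"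
    using powr_realpow[OF len_pos[OF zc, of n], of 2] by simp
  also have "\<dots> \<le> dF z n" using m unfolding n_def by simp
  also have "\<dots> \<le> (\<Prod>j<n. p0 j)" using dz unfolding z_def .
  also have "\<dots> \<le> \<theta>^(n - K)" by (rule K)
  also have "\<dots> = \<delta>^(3 * (n - K))" unfolding \<theta>_def by (simp add: power_mult)
  also have "\<dots> < \<delta>^(2*n)"
    using dpos d_le unfolding n_def by (intro power_strict_decreasing) auto
  finally show False by simp
qed

end



context qx begin

lemma xi_bounds:
  assumes c: "digit_seq N c"
  defines "f \<equiv> (\<lambda>k. Qbeta q (c k) k * (\<Prod>j<k. q (c j) j))"
  shows "summable f" "cyl_left q c n \<le> suminf f" "suminf f \<le> cyl_left q c n + cyl_len q c n"
proof -
  have f0: "0 \<le> f k" for k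
    unfolding f_def using beta_nonneg[of "c k" k] cn[OF c, of k] qpos cn[OF c]
    by (intro mult_nonneg_nonneg prod_nonneg) (auto intro: less_imp_le)
  have ps: "sum f {..<n} = cyl_left q c n" for n unfolding f_def cyl_left_def by simp
  have le1: "cyl_left q c n \<le> 1" for n using right_le1[OF c, of n] len_pos[OF c, of n] by simp
  show sf: "summable f" using f0 le1 ps by (intro summableI_nonneg_bounded[of f 1]) auto
  show "cyl_left q c n \<le> suminf f"
    using sum_le_suminf[OF sf, of "{..<n}"] f0 ps by simp
  show "suminf f \<le> cyl_left q c n + cyl_len q c n"
  proof (rule suminf_le_const[OF sf])
    fix m
    show "sum f {..<m} \<le> cyl_left q c n + cyl_len q c n"
    proof (cases "n \<le> m")
      case True
      then have "cyl_left q c m + cyl_len q c m \<le> cyl_left q c n + cyl_len q c n" by (rule right_mono[OF c])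
      then show ?thesis using ps len_pos[OF c, of m] by simp
    next
      case False
      then have "cyl_left q c m \<le> cyl_left q c n" by (intro left_mono[OF c]) simp
      then show ?thesis using ps len_pos[OF c, of n] by simp
    qed
  qed
qed

lemma len_zero_prefix:
  assumes "\<forall>j<n. c j = 0"
  shows "cyl_len q c n = cyl_len q (\<lambda>_. 0) n"
  unfolding cyl_len_def using assms by (intro prod.cong) auto

lemma left_ge_zero_len:
  assumes c: "digit_seq N c"
  shows "(\<exists>j<n. c j \<noteq> 0) \<Longrightarrow> cyl_len q (\<lambda>_. 0) n \<le> cyl_left q c n"
proof (induction n)
  case 0 then show ?case by simp
next
  case (Suc n)
  have q0: "0 < q 0 n" "q 0 n \<le> 1" using qpos[of 0 n] q_le[of 0 n] N2[of n] dpos by auto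
  have Lz: "cyl_len q (\<lambda>_. 0) (Suc n) = cyl_len q (\<lambda>_. 0) n * q 0 n" by (simp add: len_Suc)
  have Lz0: "0 < cyl_len q (\<lambda>_. 0) n"
  proof -
    have "digit_seq N (\<lambda>_. 0)" unfolding digit_seq_def using N2 by (metis less_le_trans pos2)
    then show ?thesis by (rule len_pos)
  qed
  show ?case
  proof (cases "\<exists>j<n. c j \<noteq> 0")
    case True
    have "cyl_len q (\<lambda>_. 0) (Suc n) \<le> cyl_len q (\<lambda>_. 0) n" unfolding Lz using q0 Lz0
      by (simp add: mult_le_cancel_left1)
    also have "\<dots> \<le> cyl_left q c n" using Suc.IH True by blast
    also have "\<dots> \<le> cyl_left q c (Suc n)" by (rule left_Suc_ge[OF c])
    finally show ?thesis .
  next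
    case False
    then have z: "\<forall>j<n. c j = 0" by blast
    with Suc.prems have cn0: "c n \<noteq> 0" using less_Suc_eq by auto
    have "Qbeta q 1 n \<le> Qbeta q (c n) n" using cn0 cn[OF c, of n] by (intro beta_mono) auto
    moreover have "Qbeta q 1 n = q 0 n" unfolding Qbeta_def by simp
    ultimately have b: "q 0 n \<le> Qbeta q (c n) n" by simp
    have "cyl_len q (\<lambda>_. 0) (Suc n) = q 0 n * cyl_len q c n"
      unfolding Lz len_zero_prefix[OF z] by simp
    also have "\<dots> \<le> Qbeta q (c n) n * cyl_len q c n"
      using b len_pos[OF c, of n] by (intro mult_right_mono) auto
    also have "\<dots> \<le> cyl_left q c (Suc n)" unfolding left_Suc using left_nonneg[OF c, of n] by simp
    finally show ?thesis .
  qed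
qed

end

locale qprob = qx + prob_space M for M :: "'a measure" +
  fixes d :: "nat \<Rightarrow> 'a \<Rightarrow> nat"
  assumes indep: "indep_vars (\<lambda>_. count_space UNIV) d UNIV"
    and digits: "\<forall>k. \<forall>\<omega>\<in>space M. d k \<omega> < N k"
begin

lemma dmeas[measurable]: "d k \<in> measurable M (count_space UNIV)"
  using indep unfolding indep_vars_def2 by auto

lemma xi_meas[measurable]: "(\<lambda>\<omega>. Qxi q d \<omega>) \<in> borel_measurable M"
  unfolding Qxi_def by measurable

lemma dseq: "\<omega> \<in> space M \<Longrightarrow> digit_seq N (\<lambda>k. d k \<omega>)"
  using digits unfolding digit_seq_def by auto

lemma xi_ge: "\<omega> \<in> space M \<Longrightarrow> cyl_left q (\<lambda>k. d k \<omega>) n \<le> Qxi q d \<omega>"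
  unfolding Qxi_def using xi_bounds(2)[OF dseq] by blast

lemma xi_le: "\<omega> \<in> space M \<Longrightarrow> Qxi q d \<omega> \<le> cyl_left q (\<lambda>k. d k \<omega>) n + cyl_len q (\<lambda>k. d k \<omega>) n"
  unfolding Qxi_def using xi_bounds(3)[OF dseq] by blast

lemma F_mono: "mono (distF M q d)"
proof (rule monoI)
  fix x y :: real assume "x \<le> y"
  then have "{\<omega> \<in> space M. Qxi q d \<omega> < x} \<subseteq> {\<omega> \<in> space M. Qxi q d \<omega> < y}" by auto
  then show "distF M q d x \<le> distF M q d y"
    unfolding distF_def by (intro finite_measure_mono) measurable
qed

lemma F_0: "distF M q d 0 = 0"
proof -
  have e: "{\<omega> \<in> space M. Qxi q d \<omega> < 0} = {}"
    using xi_ge[of _ 0] by (auto simp: left_0 not_less)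
  show ?thesis unfolding distF_def e by simp
qed

lemma prob_prefix:
  "prob {\<omega> \<in> space M. \<forall>j<n. d j \<omega> = c j} = (\<Prod>j<n. prob {\<omega> \<in> space M. d j \<omega> = c j})"
proof (cases "n = 0")
  case True then show ?thesis by (simp add: prob_space)
next
  case False
  have isd: "indep_sets (\<lambda>i. {d i -` A \<inter> space M | A. A \<in> sets (count_space UNIV)}) UNIV"
    using indep unfolding indep_vars_def2 by auto
  have eq: "{\<omega> \<in> space M. \<forall>j<n. d j \<omega> = c j} = (\<Inter>j\<in>{..<n}. d j -` {c j} \<inter> space M)"
    using False by auto
  have "prob (\<Inter>j\<in>{..<n}. d j -` {c j} \<inter> space M) = (\<Prod>j\<in>{..<n}. prob (d j -` {c j} \<inter> space M))"
    by (rule indep_setsD[OF isd]) (use False in auto)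
  moreover have "d j -` {c j} \<inter> space M = {\<omega> \<in> space M. d j \<omega> = c j}" for j by auto
  ultimately show ?thesis using eq by simp
qed

lemma F_1:
  assumes qF: "qxF N q \<delta> (distF M q d)"
  shows "1 \<le> distF M q d 1"
proof (rule ccontr)
  assume F1: "\<not> 1 \<le> distF M q d 1"
  define X where "X = {\<omega> \<in> space M. 1 \<le> Qxi q d \<omega>}"
  have "X = space M - {\<omega> \<in> space M. Qxi q d \<omega> < 1}" unfolding X_def by auto
  then have "prob X = 1 - distF M q d 1" unfolding distF_def by (simp add: prob_compl)
  then have a: "0 < prob X" using F1 by simp
  define p0 where "p0 j = prob {\<omega> \<in> space M. d j \<omega> = 0}" for j
  define pm where "pm j = prob {\<omega> \<in> space M. d j \<omega> = N j - 1}" for j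
  have p: "0 \<le> p0 j \<and> 0 \<le> pm j \<and> p0 j + pm j \<le> 1" for j
  proof -
    have ne: "0 \<noteq> N j - 1" using N2[of j] by simp
    have "p0 j + pm j = prob ({\<omega> \<in> space M. d j \<omega> = 0} \<union> {\<omega> \<in> space M. d j \<omega> = N j - 1})"
      unfolding p0_def pm_def using ne by (subst finite_measure_Union) (auto, measurable)
    also have "\<dots> \<le> 1" by (rule prob_le_1)
    finally show ?thesis unfolding p0_def pm_def by simp
  qed
  have ap: "prob X \<le> (\<Prod>j<n. pm j)" for n
  proof -
    have "X \<subseteq> {\<omega> \<in> space M. \<forall>j<n. d j \<omega> = N j - 1}"
    proof
      fix \<omega> assume "\<omega> \<in> X"
      then have \<omega>: "\<omega> \<in> space M" "1 \<le> Qxi q d \<omega>" unfolding X_def by auto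
      have "d j \<omega> = N j - 1" if j: "j < n" for j
      proof (rule ccontr)
        assume "d j \<omega> \<noteq> N j - 1"
        moreover have "d j \<omega> < N j" using digits \<omega>(1) by auto
        ultimately have "Suc (d j \<omega>) < N j" by linarith
        then have "cyl_left q (\<lambda>k. d k \<omega>) (Suc j) + cyl_len q (\<lambda>k. d k \<omega>) (Suc j)
            < cyl_left q (\<lambda>k. d k \<omega>) j + cyl_len q (\<lambda>k. d k \<omega>) j"
          by (rule right_Suc_lt[OF dseq[OF \<omega>(1)]])
        moreover have "cyl_left q (\<lambda>k. d k \<omega>) j + cyl_len q (\<lambda>k. d k \<omega>) j \<le> 1"
          by (rule right_le1[OF dseq[OF \<omega>(1)]])
        moreover have "Qxi q d \<omega> \<le> cyl_left q (\<lambda>k. d k \<omega>) (Suc j) + cyl_len q (\<lambda>k. d k \<omega>) (Suc j)"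
          by (rule xi_le[OF \<omega>(1)])
        ultimately show False using \<omega>(2) by linarith
      qed
      then show "\<omega> \<in> {\<omega> \<in> space M. \<forall>j<n. d j \<omega> = N j - 1}" using \<omega> by auto
    qed
    then have "prob X \<le> prob {\<omega> \<in> space M. \<forall>j<n. d j \<omega> = N j - 1}"
      by (intro finite_measure_mono) measurable
    also have "\<dots> = (\<Prod>j<n. pm j)" unfolding pm_def by (rule prob_prefix)
    finally show ?thesis .
  qed
  have dz: "distF M q d (cyl_left q (\<lambda>_. 0) n + cyl_len q (\<lambda>_. 0) n) - distF M q d (cyl_left q (\<lambda>_. 0) n)
      \<le> (\<Prod>j<n. p0 j)" for n
  proof -
    have lz: "cyl_left q (\<lambda>_. 0) n = 0" unfolding cyl_left_def by (simp add: beta_0)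
    have "{\<omega> \<in> space M. Qxi q d \<omega> < cyl_len q (\<lambda>_. 0) n} \<subseteq> {\<omega> \<in> space M. \<forall>j<n. d j \<omega> = 0}"
    proof
      fix \<omega> assume "\<omega> \<in> {\<omega> \<in> space M. Qxi q d \<omega> < cyl_len q (\<lambda>_. 0) n}"
      then have \<omega>: "\<omega> \<in> space M" "Qxi q d \<omega> < cyl_len q (\<lambda>_. 0) n" by auto
      have "\<forall>j<n. d j \<omega> = 0"
      proof (rule ccontr)
        assume "\<not> (\<forall>j<n. d j \<omega> = 0)"
        then have "\<exists>j<n. d j \<omega> \<noteq> 0" by blast
        then have "cyl_len q (\<lambda>_. 0) n \<le> cyl_left q (\<lambda>k. d k \<omega>) n"
          by (rule left_ge_zero_len[OF dseq[OF \<omega>(1)]])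
        then show False using xi_ge[OF \<omega>(1), of n] \<omega>(2) by linarith
      qed
      then show "\<omega> \<in> {\<omega> \<in> space M. \<forall>j<n. d j \<omega> = 0}" using \<omega> by auto
    qed
    then have "distF M q d (cyl_len q (\<lambda>_. 0) n) \<le> prob {\<omega> \<in> space M. \<forall>j<n. d j \<omega> = 0}"
      unfolding distF_def by (intro finite_measure_mono) measurable
    also have "\<dots> = (\<Prod>j<n. p0 j)" unfolding p0_def by (rule prob_prefix)
    finally show ?thesis unfolding lz using F_0 by simp
  qed
  show False by (rule qxF.F1_contra[OF qF p a ap dz])
qed

end

theorem lemma2:
  fixes N :: "nat \<Rightarrow> nat" and q :: "nat \<Rightarrow> nat \<Rightarrow> real"
    and M :: "'a measure" and d :: "nat \<Rightarrow> 'a \<Rightarrow> nat"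
  assumes Q: "Qexp N q"
    and inf_pos: "\<exists>\<delta>>0. \<forall>k i. i < N k \<longrightarrow> q i k \<ge> \<delta>"
    and P: "prob_space M"
    and indep: "prob_space.indep_vars M (\<lambda>_. count_space UNIV) d UNIV"
    and digits: "\<forall>k. \<forall>\<omega>\<in>space M. d k \<omega> < N k"
    and lim: "\<forall>x\<in>{0..1}. \<forall>c. digit_seq N c \<and> (\<forall>n. x \<in> cylinder q n c) \<longrightarrow>
        (\<lambda>n. ln (distF M q d (cyl_left q c n + cyl_len q c n) - distF M q d (cyl_left q c n))
              / ln (cyl_len q c n)) \<longlonglongrightarrow> 1"
  shows "\<forall>E. E \<subseteq> {0..1} \<longrightarrow>
           pack_dim (Fcyl_adm N q (distF M q d)) E = pack_dim unc_adm E"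
proof -
  obtain \<delta> where \<delta>: "0 < \<delta>" "\<And>k i. i < N k \<Longrightarrow> \<delta> \<le> q i k" using inf_pos by blast
  interpret qprob N q \<delta> M d
    by (intro qprob.intro qx.intro prob_space.intro qprob_axioms.intro Q \<delta> indep digits)
      (use P in \<open>auto simp: prob_space_def\<close>)
  interpret F: qxF N q \<delta> "distF M q d"
    by (intro qxF.intro qxF_axioms.intro qx_axioms F_mono lim)
  have q: "qxF N q \<delta> (distF M q d)" by (intro qxF.intro qxF_axioms.intro qx_axioms F_mono lim)
  show ?thesis
  proof (intro allI impI)
    fix E :: "real set" assume "E \<subseteq> {0..1}"
    then show "pack_dim (Fcyl_adm N q (distF M q d)) E = pack_dim unc_adm E"
      using F.dim_F F_0 F_1[OF q] by simp
  qed
qed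

end
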